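(* Let $\gamma>1$, $0<\Lambda_0\le\Lambda_1$, $\kappa_\gamma>0$, $K\ge1$, $0<\lambda_1\le\dots\le\lambda_K$, and let $a$ be a positive definite $K\times K$ matrix with $\Lambda_0I\le a\le\Lambda_1I$ and $|a_{ij}|\le\kappa_\gamma/(1+|i-j|^\gamma)$ for all $i,j$. Then there is a constant $c_1$, depending only on $\gamma,\kappa_\gamma,\Lambda_0,\Lambda_1$ (not on $K$, the $\lambda_i$ or $t$), such that for all $t>0$ and all $i,j$, $$(2\Lambda_1)^{-1}L(i,i,t)1_{(i=j)}\le|A_{ij}(t)|\le L(i,j,t)\frac{c_1}{1+|i-j|^\gamma}.$$
   Context: $a(t)$ is the $K\times K$ matrix with entries $a_{ij}(t)=a_{ij}(1-e^{-(\lambda_i+\lambda_j)t})/(\lambda_i+\lambda_j)$, and $A(t)=a(t)^{-1}$. $L(i,j,t)=\big(\frac{1+\lambda_it}{t}\big)^{1/2}\big(\frac{1+\lambda_jt}{t}\big)^{1/2}$. $1_{(i=j)}$ is $1$ if $i=j$ and $0$ otherwise. *)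

theory Defs
  imports "Jordan_Normal_Form.Gauss_Jordan_Elimination"
begin

definition at_mat :: "nat \<Rightarrow> (nat \<Rightarrow> real) \<Rightarrow> real mat \<Rightarrow> real \<Rightarrow> real mat" where
  "at_mat K lam a t = mat K K (\<lambda>(i,j). a $$ (i,j) * (1 - exp (-(lam i + lam j) * t)) / (lam i + lam j))"

definition At_mat :: "nat \<Rightarrow> (nat \<Rightarrow> real) \<Rightarrow> real mat \<Rightarrow> real \<Rightarrow> real mat" where
  "At_mat K lam a t = the (mat_inverse (at_mat K lam a t))"

definition Lfun :: "(nat \<Rightarrow> real) \<Rightarrow> nat \<Rightarrow> nat \<Rightarrow> real \<Rightarrow> real" where
  "Lfun lam i j t = sqrt ((1 + lam i * t) / t) * sqrt ((1 + lam j * t) / t)"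

end

theory Submission
  imports Defs "Jordan_Normal_Form.Determinant"
begin


definition vw :: "real \<Rightarrow> nat \<Rightarrow> nat \<Rightarrow> real" where
  "vw g i j = (1 + \<bar>real i - real j\<bar>) powr g"

lemma vw_ge1: "g \<ge> 0 \<Longrightarrow> vw g i j \<ge> 1"
  unfolding vw_def by (simp add: ge_one_powr_ge_zero)

lemma vw_pos: "g \<ge> 0 \<Longrightarrow> vw g i j > 0"
  using vw_ge1[of g i j] by linarith

lemma vw_sym: "vw g i j = vw g j i"
  unfolding vw_def by (simp add: abs_minus_commute)

lemma vw_diag: "vw g i i = 1"
  unfolding vw_def by simp

lemma vw_tri: assumes "g \<ge> 0" shows "vw g i j \<le> 2 powr g * (vw g i k + vw g k j)"
proof -
  let ?a = "1 + \<bar>real i - real k\<bar>" and ?b = "1 + \<bar>real k - real j\<bar>"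
  have "1 + \<bar>real i - real j\<bar> \<le> 2 * max ?a ?b" by (simp add: abs_if max_def split: if_splits)
  hence "vw g i j \<le> (2 * max ?a ?b) powr g" unfolding vw_def
    by (intro powr_mono2) (use assms in auto)
  also have "\<dots> = 2 powr g * (max ?a ?b) powr g" by (simp add: powr_mult)
  also have "(max ?a ?b) powr g \<le> vw g i k + vw g k j"
    unfolding vw_def by (cases "?a \<le> ?b") (auto simp: max_def)
  hence "2 powr g * (max ?a ?b) powr g \<le> 2 powr g * (vw g i k + vw g k j)"
    by (intro mult_left_mono) auto
  finally show ?thesis .
qed

lemma tail_term:
  fixes d p :: real assumes d: "d \<ge> 1" and p: "p > 0"
  shows "(1 + d) powr (-(p+1)) \<le> (d powr (-p) - (d+1) powr (-p)) / p"
proof -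
  have l0: "ln (d/(d+1)) \<le> d/(d+1) - 1" using d by (intro ln_le_minus_one) auto
  have "ln (d/(d+1)) = - ln ((d+1)/d)" using d by (simp add: ln_div)
  moreover have "d/(d+1) - 1 = - 1/(d+1)" using d by (simp add: field_simps)
  ultimately have l: "ln ((d+1)/d) \<ge> 1/(d+1)" using l0 by simp
  have e: "d powr (-p) = (d+1) powr (-p) * exp (p * ln ((d+1)/d))"
  proof -
    have "(d+1) powr (-p) * exp (p * ln ((d+1)/d)) = (d+1) powr (-p) * ((d+1)/d) powr p"
      using d by (simp add: powr_def)
    also have "\<dots> = d powr (-p)" using d
      by (simp add: powr_divide powr_minus field_simps)
    finally show ?thesis by simp
  qed
  have "exp (p * ln ((d+1)/d)) \<ge> 1 + p/(d+1)"
  proof -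
    have "exp (p * ln ((d+1)/d)) \<ge> 1 + p * ln ((d+1)/d)" by (rule exp_ge_add_one_self)
    moreover have "p * ln ((d+1)/d) \<ge> p/(d+1)" using mult_left_mono[OF l, of p] p by simp
    ultimately show ?thesis by linarith
  qed
  hence "d powr (-p) \<ge> (d+1) powr (-p) * (1 + p/(d+1))" unfolding e
    by (intro mult_left_mono) auto
  hence h1: "d powr (-p) - (d+1) powr (-p) \<ge> p * ((d+1) powr (-p) / (d+1))"
    using d by (simp add: field_simps)
  have h2: "(d+1) powr (-p) / (d+1) = (1 + d) powr (-(p+1))"
  proof -
    have "(1 + d) powr (-(p+1)) = (1+d) powr (-p + (-1))" by (simp add: algebra_simps)
    also have "\<dots> = (1+d) powr (-p) * (1+d) powr (-1)"
      by (rule powr_add)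
    finally have "(1 + d) powr (-(p+1)) = (1+d) powr (-p) * (1+d) powr (-1)" .
    also have "(1+d) powr (-1) = 1/(1+d)" using d by (simp add: powr_neg_one)
    finally show ?thesis by (simp add: add.commute del: powr_neg_one')
  qed
  have "p * (1 + d) powr (-(p+1)) \<le> d powr (-p) - (d+1) powr (-p)" using h1 unfolding h2 .
  then show ?thesis using p by (simp add: pos_le_divide_eq mult.commute)
qed

lemma tail_sum_aux:
  fixes p :: real assumes p: "p > 0" and M: "Suc N \<le> M"
  shows "(\<Sum>d\<in>{Suc N..<M}. (1 + real d) powr (-(p+1))) \<le> ((real (Suc N)) powr (-p) - real M powr (-p)) / p"
  using M
proof (induction M rule: dec_induct)
  case base then show ?case by simp
next
  case (step M)
  have s: "{Suc N..<Suc M} = insert M {Suc N..<M}" using step by auto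
  have "real M \<ge> 1" using step by simp
  hence t: "(1 + real M) powr (-(p+1)) \<le> (real M powr (-p) - (real M + 1) powr (-p)) / p"
    using tail_term[of "real M" p] p by simp
  have "(\<Sum>d\<in>{Suc N..<Suc M}. (1 + real d) powr (-(p+1))) = (1 + real M) powr (-(p+1)) + (\<Sum>d\<in>{Suc N..<M}. (1 + real d) powr (-(p+1)))"
    unfolding s by simp
  also have "\<dots> \<le> (real M powr (-p) - (real M + 1) powr (-p)) / p + ((real (Suc N)) powr (-p) - real M powr (-p)) / p"
    using t step.IH by linarith
  also have "\<dots> = ((real (Suc N)) powr (-p) - real (Suc M) powr (-p)) / p"
    unfolding add_divide_distrib[symmetric] by (simp add: add.commute)
  finally show ?case .
qed

lemma tail_sum:
  fixes p :: real assumes p: "p > 0"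
  shows "(\<Sum>d\<in>{Suc N..<M}. (1 + real d) powr (-(p+1))) \<le> (real (Suc N)) powr (-p) / p"
proof (cases "Suc N \<le> M")
  case True
  have "real M powr (-p) \<ge> 0" by simp
  then have "((real (Suc N)) powr (-p) - real M powr (-p)) / p \<le> (real (Suc N)) powr (-p) / p"
    using p by (intro divide_right_mono) auto
  then show ?thesis using tail_sum_aux[OF p True] by linarith
next
  case False
  then show ?thesis using p by simp
qed



lemma inj_tail:
  fixes g :: real and h :: "nat \<Rightarrow> nat"
  assumes g: "g > 1" and fin: "finite A" and inj: "inj_on h A"
    and hk: "\<And>k. k \<in> A \<Longrightarrow> N < h k \<and> h k \<le> K"
  shows "(\<Sum>k\<in>A. (1 + real (h k)) powr (-g)) \<le> real (Suc N) powr (1-g)/(g-1)"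
proof -
  have "(\<Sum>k\<in>A. (1 + real (h k)) powr (-g)) = (\<Sum>d\<in>h ` A. (1 + real d) powr (-g))"
    using sum.reindex[OF inj, of "\<lambda>d. (1 + real d) powr (-g)"] by simp
  also have "\<dots> \<le> (\<Sum>d\<in>{Suc N..<Suc K}. (1 + real d) powr (-g))"
  proof (rule sum_mono2)
    show "h ` A \<subseteq> {Suc N..<Suc K}"
    proof
      fix d assume "d \<in> h ` A"
      then obtain k where "k \<in> A" "d = h k" by auto
      with hk[of k] show "d \<in> {Suc N..<Suc K}" by auto
    qed
  qed auto
  also have "\<dots> \<le> real (Suc N) powr (-(g-1))/(g-1)"
    using tail_sum[of "g-1" N "Suc K"] g by simp
  finally show ?thesis by simp
qed

lemma tail_k:
  fixes g :: real assumes g: "g > 1" and j: "j < K"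
  shows "(\<Sum>k\<in>{k. k<K \<and> real N < \<bar>real k - real j\<bar>}. 1 / vw g k j) \<le> 2 * (real (Suc N) powr (1-g)/(g-1))"
proof -
  let ?F = "\<lambda>k. 1 / vw g k j"
  have s: "{k. k<K \<and> real N < \<bar>real k - real j\<bar>} = {k. k<K \<and> j + N < k} \<union> {k. k<K \<and> k + N < j}"
    by auto
  have d: "{k. k<K \<and> j + N < k} \<inter> {k. k<K \<and> k + N < j} = {}" by auto
  have "(\<Sum>k\<in>{k. k<K \<and> real N < \<bar>real k - real j\<bar>}. ?F k) = (\<Sum>k\<in>{k. k<K \<and> j + N < k}. ?F k) + (\<Sum>k\<in>{k. k<K \<and> k + N < j}. ?F k)"
    unfolding s by (rule sum.union_disjoint) (use d in auto)
  also have "(\<Sum>k\<in>{k. k<K \<and> j + N < k}. ?F k) = (\<Sum>k\<in>{k. k<K \<and> j + N < k}. (1 + real (k - j)) powr (-g))"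
    by (rule sum.cong) (auto simp: vw_def powr_minus_divide of_nat_diff)
  also have "\<dots> \<le> real (Suc N) powr (1-g)/(g-1)"
    by (rule inj_tail[OF g, where K=K]) (auto simp: inj_on_def)
  also have "(\<Sum>k\<in>{k. k<K \<and> k + N < j}. ?F k) = (\<Sum>k\<in>{k. k<K \<and> k + N < j}. (1 + real (j - k)) powr (-g))"
    by (rule sum.cong) (auto simp: vw_def powr_minus_divide of_nat_diff)
  also have "\<dots> \<le> real (Suc N) powr (1-g)/(g-1)"
    by (rule inj_tail[OF g, where K=K]) (use j in \<open>auto simp: inj_on_def\<close>)
  finally show ?thesis by simp
qed

definition Sg :: "real \<Rightarrow> real" where "Sg g = 1 + 2 / (g - 1)"

lemma colsum_w:
  fixes g :: real assumes g: "g > 1" and j: "j < K"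
  shows "(\<Sum>k<K. 1 / vw g k j) \<le> Sg g"
proof -
  have s: "{..<K} = insert j {k. k<K \<and> real 0 < \<bar>real k - real j\<bar>}" using j by auto
  have "(\<Sum>k<K. 1 / vw g k j) = 1 / vw g j j + (\<Sum>k\<in>{k. k<K \<and> real 0 < \<bar>real k - real j\<bar>}. 1 / vw g k j)"
    unfolding s by (subst sum.insert) auto
  also have "\<dots> \<le> 1 + 2 * (real (Suc 0) powr (1-g)/(g-1))"
    using tail_k[OF g j, of 0] by (simp add: vw_diag)
  finally show ?thesis by (simp add: Sg_def)
qed

lemma rowsum_w:
  fixes g :: real assumes g: "g > 1" and j: "i < K"
  shows "(\<Sum>k<K. 1 / vw g i k) \<le> Sg g"
  using colsum_w[OF assms] by (simp add: vw_sym)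



type_synonym rmat = "nat \<Rightarrow> nat \<Rightarrow> real"

definition mm :: "nat \<Rightarrow> rmat \<Rightarrow> rmat \<Rightarrow> rmat" where
  "mm K C D = (\<lambda>i j. \<Sum>k<K. C i k * D k j)"
definition idm :: rmat where "idm = (\<lambda>i j. if i = j then 1 else 0)"
fun mpow :: "nat \<Rightarrow> rmat \<Rightarrow> nat \<Rightarrow> rmat" where
  "mpow K C 0 = idm" | "mpow K C (Suc n) = mm K C (mpow K C n)"
definition mv :: "nat \<Rightarrow> rmat \<Rightarrow> (nat \<Rightarrow> real) \<Rightarrow> (nat \<Rightarrow> real)" where
  "mv K C x = (\<lambda>i. \<Sum>j<K. C i j * x j)"
definition sq :: "nat \<Rightarrow> (nat \<Rightarrow> real) \<Rightarrow> real" where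
  "sq K x = (\<Sum>i<K. (x i)^2)"
definition opb :: "nat \<Rightarrow> rmat \<Rightarrow> real \<Rightarrow> bool" where
  "opb K C r = (\<forall>x. sq K (mv K C x) \<le> r^2 * sq K x)"
definition symm :: "nat \<Rightarrow> rmat \<Rightarrow> bool" where
  "symm K C = (\<forall>i<K. \<forall>j<K. C i j = C j i)"
definition eqK :: "nat \<Rightarrow> rmat \<Rightarrow> rmat \<Rightarrow> bool" where
  "eqK K A B = (\<forall>i<K. \<forall>j<K. A i j = B i j)"
definition gn :: "real \<Rightarrow> nat \<Rightarrow> rmat \<Rightarrow> real" where
  "gn g K C = Max ((\<lambda>(i,j). \<bar>C i j\<bar> * vw g i j) ` ({..<K} \<times> {..<K}))"

lemma mm_assoc: "mm K (mm K A B) C = mm K A (mm K B C)"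
  unfolding mm_def
  by (auto simp: sum_distrib_left sum_distrib_right mult.assoc intro!: ext sum.swap[THEN trans])

lemma delta_l: "(\<Sum>k<(K::nat). (if i = k then 1 else (0::real)) * f k) = (if i < K then f i else 0)"
proof -
  have "(\<Sum>k<K. (if i = k then 1 else (0::real)) * f k) = (\<Sum>k<K. if i = k then f k else 0)"
    by (rule sum.cong) auto
  then show ?thesis by (simp only: sum.delta' finite_lessThan lessThan_iff)
qed

lemma delta_r: "(\<Sum>k<(K::nat). f k * (if k = j then 1 else (0::real))) = (if j < K then f j else 0)"
proof -
  have "(\<Sum>k<K. f k * (if k = j then 1 else (0::real))) = (\<Sum>k<K. if k = j then f k else 0)"
    by (rule sum.cong) auto
  then show ?thesis by (simp only: sum.delta finite_lessThan lessThan_iff)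
qed

lemma mm_cong: "eqK K A A' \<Longrightarrow> eqK K B B' \<Longrightarrow> eqK K (mm K A B) (mm K A' B')"
  unfolding eqK_def mm_def by (auto intro!: sum.cong)

lemma mm_cong2: "eqK K B B' \<Longrightarrow> i < K \<Longrightarrow> j < K \<Longrightarrow> mm K A B i j = mm K A B' i j"
  unfolding eqK_def mm_def by (auto intro!: sum.cong)

lemma eqK_refl: "eqK K A A" unfolding eqK_def by auto
lemma eqK_sym: "eqK K A B \<Longrightarrow> eqK K B A" unfolding eqK_def by auto
lemma eqK_trans: "eqK K A B \<Longrightarrow> eqK K B C \<Longrightarrow> eqK K A C" unfolding eqK_def by auto

lemma mm_idm_left: "eqK K (mm K idm C) C"
  unfolding eqK_def mm_def idm_def by (auto simp: delta_l)

lemma mm_idm_right: "eqK K (mm K C idm) C"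
  unfolding eqK_def mm_def idm_def by (auto simp: delta_r)

lemma mpow_add: "eqK K (mpow K C (m+n)) (mm K (mpow K C m) (mpow K C n))"
proof (induction m)
  case 0 then show ?case using mm_idm_left[of K] eqK_sym by simp
next
  case (Suc m)
  have "eqK K (mpow K C (Suc m + n)) (mm K C (mm K (mpow K C m) (mpow K C n)))"
    using mm_cong[OF eqK_refl Suc.IH] by simp
  then show ?case by (simp add: mm_assoc)
qed

lemma mpow_one: "eqK K (mpow K C 1) C"
  using mm_idm_right[of K C] by simp

lemma mpow_Suc': "eqK K (mpow K C (Suc n)) (mm K (mpow K C n) C)"
  using mpow_add[of K C n 1] mm_cong[OF eqK_refl mpow_one, of K "mpow K C n" C]
  by (auto intro: eqK_trans)

lemma symm_cong: "eqK K A B \<Longrightarrow> symm K A \<Longrightarrow> symm K B"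
  unfolding eqK_def symm_def by metis

lemma symm_mpow: assumes "symm K C" shows "symm K (mpow K C n)"
proof (induction n)
  case 0 then show ?case by (auto simp: symm_def idm_def)
next
  case (Suc n)
  have "symm K (mm K C (mpow K C n))" unfolding symm_def
  proof (intro allI impI)
    fix i j assume ij: "i < K" "j < K"
    have "mm K C (mpow K C n) i j = mm K (mpow K C n) C j i"
      unfolding mm_def using assms Suc.IH ij unfolding symm_def
      by (auto intro!: sum.cong simp: mult.commute)
    also have "\<dots> = mm K C (mpow K C n) j i"
      using mpow_Suc'[of K C n] ij unfolding eqK_def by simp
    finally show "mm K C (mpow K C n) i j = mm K C (mpow K C n) j i" .
  qed
  then show ?case by simp
qed

lemma mv_mm: "mv K (mm K A B) x = mv K A (mv K B x)"
  unfolding mv_def mm_def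
  by (auto intro!: ext simp: sum_distrib_left sum_distrib_right mult.assoc intro: sum.swap)

lemma opb_mm: assumes "opb K A r1" "opb K B r2" shows "opb K (mm K A B) (r1*r2)"
  unfolding opb_def
proof
  fix x
  have "sq K (mv K (mm K A B) x) = sq K (mv K A (mv K B x))" by (simp add: mv_mm)
  also have "\<dots> \<le> r1^2 * sq K (mv K B x)" using assms(1) unfolding opb_def by blast
  also have "\<dots> \<le> r1^2 * (r2^2 * sq K x)" using assms(2) unfolding opb_def
    by (intro mult_left_mono) auto
  finally show "sq K (mv K (mm K A B) x) \<le> (r1 * r2)^2 * sq K x" by (simp add: power_mult_distrib)
qed

lemma opb_idm: "opb K idm 1"
proof -
  have "mv K idm x i = x i" if "i < K" for x i unfolding mv_def idm_def using delta_l[where i=i and K=K and f=x] that by simp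
  then show ?thesis unfolding opb_def sq_def by simp
qed

lemma opb_mpow: assumes "opb K C r" shows "opb K (mpow K C n) (r^n)"
proof (induction n)
  case 0 then show ?case using opb_idm by simp
next
  case (Suc n) then show ?case using opb_mm[OF assms Suc] by simp
qed

lemma opb_col: assumes "opb K C r" "j < K" shows "(\<Sum>k<K. (C k j)^2) \<le> r^2"
proof -
  let ?e = "\<lambda>i. if i = j then 1 else (0::real)"
  have "mv K C ?e = (\<lambda>k. C k j)" unfolding mv_def
  proof
    fix i show "(\<Sum>ja<K. C i ja * ?e ja) = C i j"
      using assms(2) delta_r[where f="\<lambda>k. C i k" and K=K and j=j] by simp
  qed
  moreover have "sq K ?e = 1" unfolding sq_def using assms(2)
  proof -
    have "(\<Sum>i<K. (?e i)^2) = (\<Sum>i<K. if i = j then 1 else 0)" by (rule sum.cong) auto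
    then show "(\<Sum>i<K. (?e i)^2) = 1" using assms(2) by simp
  qed
  ultimately show ?thesis using assms(1) unfolding opb_def sq_def by (metis mult.right_neutral)
qed

lemma opb_entry: assumes "opb K C r" "r \<ge> 0" "i < K" "j < K" shows "\<bar>C i j\<bar> \<le> r"
proof -
  have "(C i j)^2 \<le> (\<Sum>k<K. (C k j)^2)"
    using assms(3) by (intro member_le_sum) auto
  also have "\<dots> \<le> r^2" by (rule opb_col[OF assms(1,4)])
  finally show ?thesis using assms(2) by (metis abs_le_square_iff abs_of_nonneg)
qed

lemma opb_cong: "eqK K A B \<Longrightarrow> opb K A r \<Longrightarrow> opb K B r"
proof -
  assume e: "eqK K A B" and o: "opb K A r"
  have "sq K (mv K A x) = sq K (mv K B x)" for x
    using e unfolding sq_def mv_def eqK_def by (auto intro!: sum.cong)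
  then show ?thesis using o unfolding opb_def by metis
qed

lemma gn_ge: assumes "i < K" "j < K" shows "\<bar>C i j\<bar> * vw g i j \<le> gn g K C"
  unfolding gn_def by (rule Max_ge) (use assms in auto)

lemma gn_le: assumes "0 < K" "\<And>i j. i < K \<Longrightarrow> j < K \<Longrightarrow> \<bar>C i j\<bar> * vw g i j \<le> B"
  shows "gn g K C \<le> B"
  unfolding gn_def using assms by (subst Max_le_iff) auto

lemma gn_nonneg: assumes "0 < K" "g \<ge> 0" shows "0 \<le> gn g K C"
proof -
  have "0 \<le> \<bar>C 0 0\<bar> * vw g 0 0" using vw_ge1[of g 0 0] assms by simp
  then show ?thesis using gn_ge[of 0 K 0 C g] assms by linarith
qed

lemma gn_entry: assumes "i < K" "j < K" "g \<ge> 0" shows "\<bar>C i j\<bar> \<le> gn g K C / vw g i j"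
  using gn_ge[OF assms(1,2), of C g] vw_pos[OF assms(3), of i j] by (simp add: pos_le_divide_eq)

lemma gn_cong: "eqK K A B \<Longrightarrow> gn g K A = gn g K B"
  unfolding gn_def eqK_def by (intro arg_cong[where f=Max] image_cong) auto

lemma sum_abs_col: assumes g: "g > 1" and j: "j < K"
  shows "(\<Sum>k<K. \<bar>D k j\<bar>) \<le> gn g K D * Sg g"
proof -
  have "(\<Sum>k<K. \<bar>D k j\<bar>) \<le> (\<Sum>k<K. gn g K D * (1 / vw g k j))"
    using gn_entry[of _ K j g D] j g by (intro sum_mono) auto
  also have "\<dots> = gn g K D * (\<Sum>k<K. 1 / vw g k j)" by (simp add: sum_distrib_left)
  also have "\<dots> \<le> gn g K D * Sg g"
    using colsum_w[OF g j] gn_nonneg[of K g D] j g by (intro mult_left_mono) auto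
  finally show ?thesis .
qed

lemma sum_abs_row: assumes g: "g > 1" and i: "i < K"
  shows "(\<Sum>k<K. \<bar>D i k\<bar>) \<le> gn g K D * Sg g"
proof -
  have "(\<Sum>k<K. \<bar>D i k\<bar>) \<le> (\<Sum>k<K. gn g K D * (1 / vw g i k))"
    using gn_entry[of i K _ g D] i g by (intro sum_mono) auto
  also have "\<dots> = gn g K D * (\<Sum>k<K. 1 / vw g i k)" by (simp add: sum_distrib_left)
  also have "\<dots> \<le> gn g K D * Sg g"
    using rowsum_w[OF g i] gn_nonneg[of K g D] i g by (intro mult_left_mono) auto
  finally show ?thesis .
qed

lemma mm_entry_bound:
  assumes g: "g > 1" and ij: "i < K" "j < K"
  shows "\<bar>mm K C D i j\<bar> * vw g i j \<le> 2 powr g * (gn g K C * (\<Sum>k<K. \<bar>D k j\<bar>) + gn g K D * (\<Sum>k<K. \<bar>C i k\<bar>))"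
proof -
  have "\<bar>mm K C D i j\<bar> * vw g i j \<le> (\<Sum>k<K. \<bar>C i k\<bar> * \<bar>D k j\<bar>) * vw g i j"
    unfolding mm_def using vw_ge1[of g i j] g
    by (intro mult_right_mono) (auto intro: order.trans[OF sum_abs] simp: abs_mult)
  also have "\<dots> = (\<Sum>k<K. \<bar>C i k\<bar> * \<bar>D k j\<bar> * vw g i j)" by (simp add: sum_distrib_right)
  also have "\<dots> \<le> (\<Sum>k<K. \<bar>C i k\<bar> * \<bar>D k j\<bar> * (2 powr g * (vw g i k + vw g k j)))"
    using vw_tri[of g i j] g by (intro sum_mono mult_left_mono) auto
  also have "\<dots> = 2 powr g * ((\<Sum>k<K. (\<bar>C i k\<bar> * vw g i k) * \<bar>D k j\<bar>) + (\<Sum>k<K. (\<bar>D k j\<bar> * vw g k j) * \<bar>C i k\<bar>))"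
    by (simp add: sum_distrib_left sum.distrib[symmetric] algebra_simps)
  also have "\<dots> \<le> 2 powr g * ((\<Sum>k<K. gn g K C * \<bar>D k j\<bar>) + (\<Sum>k<K. gn g K D * \<bar>C i k\<bar>))"
    using gn_ge[of i K _ C g] gn_ge[of _ K j D g] ij
    by (intro mult_left_mono add_mono sum_mono mult_right_mono) auto
  also have "\<dots> = 2 powr g * (gn g K C * (\<Sum>k<K. \<bar>D k j\<bar>) + gn g K D * (\<Sum>k<K. \<bar>C i k\<bar>))"
    by (simp add: sum_distrib_left)
  finally show ?thesis .
qed

lemma gn_mm: assumes g: "g > 1" and K: "0 < K"
  shows "gn g K (mm K C D) \<le> (2 * 2 powr g * Sg g) * gn g K C * gn g K D"
proof (rule gn_le[OF K])
  fix i j assume ij: "i < K" "j < K"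
  have "gn g K C * (\<Sum>k<K. \<bar>D k j\<bar>) + gn g K D * (\<Sum>k<K. \<bar>C i k\<bar>) \<le> gn g K C * (gn g K D * Sg g) + gn g K D * (gn g K C * Sg g)"
    using sum_abs_col[OF g ij(2), of D] sum_abs_row[OF g ij(1), of C]
      gn_nonneg[OF K, of g C] gn_nonneg[OF K, of g D] g
    by (intro add_mono mult_left_mono) auto
  hence "2 powr g * (gn g K C * (\<Sum>k<K. \<bar>D k j\<bar>) + gn g K D * (\<Sum>k<K. \<bar>C i k\<bar>)) \<le> 2 powr g * (gn g K C * (gn g K D * Sg g) + gn g K D * (gn g K C * Sg g))"
    by (intro mult_left_mono) auto
  hence "\<bar>mm K C D i j\<bar> * vw g i j \<le> 2 powr g * (gn g K C * (gn g K D * Sg g) + gn g K D * (gn g K C * Sg g))"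
    using mm_entry_bound[OF g ij, of C D] by linarith
  then show "\<bar>mm K C D i j\<bar> * vw g i j \<le> (2 * 2 powr g * Sg g) * gn g K C * gn g K D"
    by (simp add: algebra_simps)
qed



lemma sum_sq_card: "(\<Sum>i\<in>I. f i)^2 \<le> real (card I) * (\<Sum>i\<in>I. (f i)^2)"
proof (cases "finite I")
  case True
  have "(\<Sum>i\<in>I. f i)^2 = (\<Sum>i\<in>I. \<Sum>j\<in>I. f i * f j)"
    by (simp add: power2_eq_square sum_product)
  also have "\<dots> \<le> (\<Sum>i\<in>I. \<Sum>j\<in>I. ((f i)^2 + (f j)^2)/2)"
  proof (intro sum_mono)
    fix i j
    have e: "(f i - f j)^2 = (f i)^2 - 2*(f i * f j) + (f j)^2" by (simp add: power2_diff)
    have "0 \<le> (f i - f j)^2" by simp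
    then have "2*(f i * f j) \<le> (f i)^2 + (f j)^2" using e by linarith
    then show "f i * f j \<le> ((f i)^2 + (f j)^2)/2" by simp
  qed
  also have "\<dots> = real (card I) * (\<Sum>i\<in>I. (f i)^2)"
    by (simp add: sum.distrib add_divide_distrib sum_divide_distrib[symmetric] sum.swap[of "\<lambda>i j. (f j)^2"] sum_distrib_left)
  finally show ?thesis .
qed simp

lemma card_near: "card {k. k < K \<and> \<bar>real k - real j\<bar> \<le> real N} \<le> 2*N+1"
proof -
  have "{k. k < K \<and> \<bar>real k - real j\<bar> \<le> real N} \<subseteq> {j - N..j + N}" by auto
  hence "card {k. k < K \<and> \<bar>real k - real j\<bar> \<le> real N} \<le> card {j - N..j + N}"
    by (intro card_mono) auto
  also have "\<dots> \<le> 2*N+1" by simp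
  finally show ?thesis .
qed

lemma colsum_op:
  assumes g: "g > 1" and q: "opb K C q" "q \<ge> 0" and j: "j < K"
  shows "(\<Sum>k<K. \<bar>C k j\<bar>) \<le> sqrt (real (2*N+1)) * q + gn g K C * (2 * (real (Suc N) powr (1-g)/(g-1)))"
proof -
  let ?near = "{k. k < K \<and> \<bar>real k - real j\<bar> \<le> real N}"
  let ?far = "{k. k < K \<and> real N < \<bar>real k - real j\<bar>}"
  have s: "{..<K} = ?near \<union> ?far" by auto
  have "(\<Sum>k<K. \<bar>C k j\<bar>) = (\<Sum>k\<in>?near. \<bar>C k j\<bar>) + (\<Sum>k\<in>?far. \<bar>C k j\<bar>)"
    unfolding s by (rule sum.union_disjoint) auto
  moreover have "(\<Sum>k\<in>?near. \<bar>C k j\<bar>) \<le> sqrt (real (2*N+1)) * q"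
  proof -
    have "(\<Sum>k\<in>?near. \<bar>C k j\<bar>)^2 \<le> real (card ?near) * (\<Sum>k\<in>?near. \<bar>C k j\<bar>^2)"
      by (rule sum_sq_card)
    also have "\<dots> \<le> real (2*N+1) * (\<Sum>k<K. (C k j)^2)"
    proof (rule mult_mono)
      show "real (card ?near) \<le> real (2*N+1)" using card_near[of K j N] by linarith
      have "(\<Sum>k\<in>?near. (C k j)^2) \<le> (\<Sum>k<K. (C k j)^2)" by (rule sum_mono2) auto
      then show "(\<Sum>k\<in>?near. \<bar>C k j\<bar>^2) \<le> (\<Sum>k<K. (C k j)^2)" by simp
    qed (auto intro: sum_nonneg)
    also have "\<dots> \<le> real (2*N+1) * q^2"
      using opb_col[OF q(1) j] by (intro mult_left_mono) auto
    finally have "(\<Sum>k\<in>?near. \<bar>C k j\<bar>) \<le> sqrt (real (2*N+1) * q^2)"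
      by (intro real_le_rsqrt) 
    also have "\<dots> = sqrt (real (2*N+1)) * q" using q(2) by (simp add: real_sqrt_mult)
    finally show ?thesis .
  qed
  moreover have "(\<Sum>k\<in>?far. \<bar>C k j\<bar>) \<le> gn g K C * (2 * (real (Suc N) powr (1-g)/(g-1)))"
  proof -
    have "(\<Sum>k\<in>?far. \<bar>C k j\<bar>) \<le> (\<Sum>k\<in>?far. gn g K C * (1 / vw g k j))"
      using gn_entry[of _ K j g C] j g by (intro sum_mono) auto
    also have "\<dots> = gn g K C * (\<Sum>k\<in>?far. 1 / vw g k j)" by (simp add: sum_distrib_left)
    also have "\<dots> \<le> gn g K C * (2 * (real (Suc N) powr (1-g)/(g-1)))"
      using tail_k[OF g j, of N] gn_nonneg[of K g C] j g by (intro mult_left_mono) auto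
    finally show ?thesis .
  qed
  ultimately show ?thesis by linarith
qed

lemma balance:
  fixes e q G :: real
  assumes e: "e > 0" and q: "0 < q" "q \<le> G"
  defines "u \<equiv> 1/(1+2*e)"
  shows "\<exists>N::nat. sqrt (real (2*N+1)) * q + G * (2 * (real (Suc N) powr (-e)/e)) \<le> (2 + 2/e) * (G powr u * q powr (1-u))"
proof -
  have G: "G > 0" using q by simp
  have u: "0 < u" "u < 1" using e unfolding u_def by (auto simp: field_simps)
  have ue: "1 - 2*u*e = u" using e unfolding u_def by (simp add: field_simps)
  define a where "a = ln G - ln q"
  have a: "a \<ge> 0" using q unfolding a_def by simp
  define X where "X = exp (2*u*a)"
  have X1: "X \<ge> 1" unfolding X_def using a u by simp
  define N where "N = nat (ceiling X) - 1"
  have c1: "ceiling X \<ge> 1" using X1 by simp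
  have "Suc N = nat (ceiling X)" unfolding N_def using c1 by simp
  hence cN: "real (Suc N) = real_of_int (ceiling X)" using c1 by simp
  have XN: "X \<le> real (Suc N)" "real (Suc N) \<le> 2*X"
    using cN X1 le_of_int_ceiling[of X] of_int_ceiling_le_add_one[of X] by linarith+
  have "sqrt (real (2*N+1)) \<le> sqrt (4*X)" using XN by (intro real_sqrt_le_mono) auto
  also have "sqrt (4*X) = 2 * exp (u*a)"
  proof -
    have e: "4*X = (2 * exp (u*a))^2" unfolding X_def
      by (simp add: power2_eq_square exp_add[symmetric] algebra_simps)
    have "sqrt (4*X) = \<bar>2 * exp (u*a)\<bar>" unfolding e by (rule real_sqrt_abs)
    then show ?thesis by simp
  qed
  finally have s1: "sqrt (real (2*N+1)) * q \<le> 2 * exp (u*a) * q" using q by (intro mult_right_mono) auto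
  have "real (Suc N) powr (-e) \<le> X powr (-e)"
    using XN X1 e by (intro powr_mono2') auto
  also have "X powr (-e) = exp (-e*2*u*a)" unfolding X_def powr_def by simp
  finally have s2: "G * (2 * (real (Suc N) powr (-e)/e)) \<le> G * (2 * (exp (-e*2*u*a)/e))"
    using G e by (intro mult_left_mono divide_right_mono) auto
  define Z where "Z = exp (u * ln G + (1-u) * ln q)"
  have E1: "G powr u * q powr (1-u) = exp (u * ln G + (1-u) * ln q)" using q G by (simp add: powr_def exp_add)
  have E2: "exp (u*a) * q = exp (u * ln G + (1-u) * ln q)"
  proof -
    have "exp (u*a) * q = exp (u*a + ln q)" using q by (simp add: exp_add)
    also have "u*a + ln q = u * ln G + (1-u) * ln q" unfolding a_def by (simp add: algebra_simps)
    finally show ?thesis .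
  qed
  have E3: "G * exp (-e*2*u*a) = exp (u * ln G + (1-u) * ln q)"
  proof -
    have "G * exp (-e*2*u*a) = exp (ln G + (-e*2*u*a))"
      using G exp_add[of "ln G" "-e*2*u*a"] by simp
    also have "ln G + (-e*2*u*a) = (1 - 2*u*e) * ln G + (2*u*e) * ln q" unfolding a_def by (simp add: algebra_simps)
    also have "\<dots> = u * ln G + (1-u) * ln q"
    proof -
      have h: "2*u*e = 1-u" using ue by linarith
      have "(1 - 2*u*e) * ln G + (2*u*e) * ln q = (1 - (1-u)) * ln G + (1-u) * ln q" by (simp only: h)
      then show ?thesis by simp
    qed
    finally show ?thesis .
  qed
  have t1: "sqrt (real (2*N+1)) * q \<le> 2 * Z"
    using s1 E2 unfolding Z_def by (metis mult.assoc)
  have "G * (2 * (exp (-e*2*u*a)/e)) = 2 * (G * exp (-e*2*u*a)) / e" by simp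
  also have "\<dots> = 2 * Z / e" unfolding E3 Z_def ..
  finally have t2: "G * (2 * (real (Suc N) powr (-e)/e)) \<le> 2 * Z / e"
    using s2 by linarith
  have "(2 + 2/e) * (G powr u * q powr (1-u)) = 2 * Z + 2 * Z / e"
    unfolding E1 Z_def[symmetric] by (simp add: algebra_simps)
  hence "sqrt (real (2*N+1)) * q + G * (2 * (real (Suc N) powr (-e)/e)) \<le> (2 + 2/e) * (G powr u * q powr (1-u))"
    using t1 t2 by linarith
  then show ?thesis by blast
qed



definition uu :: "real \<Rightarrow> real" where "uu g = 1/(1+2*(g-1))"
definition cS :: "real \<Rightarrow> real" where "cS g = 2 * 2 powr g * (2 + 2/(g-1))"

lemma uu_bounds: "g > 1 \<Longrightarrow> 0 < uu g \<and> uu g < 1"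
  unfolding uu_def by (auto simp: field_simps)

lemma cS_ge1: "g > 1 \<Longrightarrow> cS g \<ge> 1"
proof -
  assume g: "g > 1"
  have "2 powr g \<ge> 1" using g by (simp add: ge_one_powr_ge_zero)
  moreover have "2 + 2/(g-1) \<ge> 2" using g by simp
  ultimately have "2 powr g * (2 + 2/(g-1)) \<ge> 1 * 2" by (intro mult_mono) auto
  then show ?thesis unfolding cS_def by simp
qed

lemma sq_step:
  assumes g: "g > 1" and K: "0 < K" and C: "symm K C" "opb K C q" and q: "0 < q" "q \<le> G"
    and gC: "gn g K C \<le> G"
  shows "gn g K (mm K C C) \<le> cS g * (G powr (1 + uu g) * q powr (1 - uu g))"
proof -
  let ?u = "uu g"
  have e: "g - 1 > 0" using g by simp
  have ueq: "?u = 1/(1+2*(g-1))" unfolding uu_def ..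
  obtain N :: nat where N: "sqrt (real (2*N+1)) * q + G * (2 * (real (Suc N) powr (-(g-1))/(g-1))) \<le> (2 + 2/(g-1)) * (G powr ?u * q powr (1-?u))"
    using balance[OF e q] unfolding ueq by blast
  define cs where "cs = (2 + 2/(g-1)) * (G powr ?u * q powr (1-?u))"
  have col: "(\<Sum>k<K. \<bar>C k j\<bar>) \<le> cs" if j: "j < K" for j
  proof -
    have "(\<Sum>k<K. \<bar>C k j\<bar>) \<le> sqrt (real (2*N+1)) * q + gn g K C * (2 * (real (Suc N) powr (1-g)/(g-1)))"
      using colsum_op[OF g C(2) _ j, of N] q by simp
    also have "\<dots> \<le> sqrt (real (2*N+1)) * q + G * (2 * (real (Suc N) powr (1-g)/(g-1)))"
      using gC e by (intro add_left_mono mult_right_mono) auto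
    also have "(1-g) = -(g-1)" by simp
    finally show ?thesis using N unfolding cs_def by simp
  qed
  have row: "(\<Sum>k<K. \<bar>C i k\<bar>) \<le> cs" if i: "i < K" for i
  proof -
    have "(\<Sum>k<K. \<bar>C i k\<bar>) = (\<Sum>k<K. \<bar>C k i\<bar>)"
      using C(1) i unfolding symm_def by (intro sum.cong) auto
    then show ?thesis using col[OF i] by simp
  qed
  have Gp: "G > 0" using q by simp
  have gn0: "0 \<le> gn g K C" using gn_nonneg[OF K] g by simp
  show ?thesis
  proof (rule gn_le[OF K])
    fix i j assume ij: "i < K" "j < K"
    have "\<bar>mm K C C i j\<bar> * vw g i j \<le> 2 powr g * (gn g K C * (\<Sum>k<K. \<bar>C k j\<bar>) + gn g K C * (\<Sum>k<K. \<bar>C i k\<bar>))"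
      by (rule mm_entry_bound[OF g ij])
    also have "\<dots> \<le> 2 powr g * (G * cs + G * cs)"
      using col[OF ij(2)] row[OF ij(1)] gC gn0 Gp
      by (intro mult_left_mono add_mono mult_mono) (auto intro: sum_nonneg)
    also have "\<dots> = cS g * (G * G powr ?u * q powr (1 - ?u))"
      unfolding cS_def cs_def by (simp add: algebra_simps)
    also have "G * G powr ?u = G powr (1 + ?u)" using Gp by (simp add: powr_add)
    finally show "\<bar>mm K C C i j\<bar> * vw g i j \<le> cS g * (G powr (1 + ?u) * q powr (1 - ?u))"
      by (simp add: mult.assoc)
  qed
qed



lemma iter_log:
  assumes g: "g > 1" and K: "0 < K" and A: "symm K A" "opb K A r" "gn g K A \<le> G"
    and r: "1/2 \<le> r" "r < 1" and G: "G > 0"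
  defines "u \<equiv> uu g" and "cu \<equiv> cS g powr (1 / uu g)" and "l \<equiv> - ln r"
  defines "phi \<equiv> ln cu + ln (max G 1) + l/2"
  shows "ln (cu * max (gn g K (mpow K A (2^k))) (r^(2^k))) \<le> (1+u)^k * phi - 2^k * l / 2"
proof (induction k)
  have rp: "r > 0" using r by simp
  have cu1: "cu \<ge> 1" unfolding cu_def using cS_ge1[OF g] uu_bounds[OF g] by (simp add: ge_one_powr_ge_zero)
  case 0
  have "gn g K (mpow K A (2^0)) = gn g K A" using gn_cong[OF mpow_one[of K A]] by simp
  hence "max (gn g K (mpow K A (2^0))) (r^(2^0)) \<le> max G 1" using A(3) r by auto
  hence "cu * max (gn g K (mpow K A (2^0))) (r^(2^0)) \<le> cu * max G 1" using cu1 by (intro mult_left_mono) auto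
  moreover have "0 < cu * max (gn g K (mpow K A (2^0))) (r^(2^0))" using cu1 rp by (intro mult_pos_pos) auto
  ultimately have "ln (cu * max (gn g K (mpow K A (2^0))) (r^(2^0))) \<le> ln (cu * max G 1)" by simp
  also have "\<dots> = ln cu + ln (max G 1)" using cu1 G by (subst ln_mult) auto
  finally show ?case unfolding phi_def using rp r unfolding l_def by simp
next
  case (Suc k)
  have rp: "r > 0" using r by simp
  have u: "0 < u" "u < 1" unfolding u_def using uu_bounds[OF g] by auto
  have cSp: "cS g \<ge> 1" using cS_ge1[OF g] .
  have cu1: "cu \<ge> 1" unfolding cu_def using cS_ge1[OF g] uu_bounds[OF g] by (simp add: ge_one_powr_ge_zero)
  have lncu: "ln (cS g) = u * ln cu" unfolding cu_def u_def using cSp uu_bounds[OF g] by (simp add: ln_powr)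
  define P where "P = mpow K A (2^k)"
  define ok where "ok = r^(2^k)"
  define Gk where "Gk = max (gn g K P) ok"
  have okp: "ok > 0" unfolding ok_def using rp by simp
  have Gk: "ok \<le> Gk" "gn g K P \<le> Gk" "Gk > 0" unfolding Gk_def using okp by auto
  have Psym: "symm K P" unfolding P_def by (rule symm_mpow[OF A(1)])
  have Pop: "opb K P ok" unfolding P_def ok_def using opb_mpow[OF A(2)] by (simp add: power_mult)
  have "gn g K (mpow K A (2^Suc k)) = gn g K (mm K P P)"
    unfolding P_def using gn_cong[OF mpow_add[of K A "2^k" "2^k"]] by (simp add: mult_2)
  also have "\<dots> \<le> cS g * (Gk powr (1 + u) * ok powr (1 - u))"
    unfolding u_def by (rule sq_step[OF g K Psym Pop okp Gk(1) Gk(2)])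
  finally have s1: "gn g K (mpow K A (2^Suc k)) \<le> cS g * (Gk powr (1 + u) * ok powr (1 - u))" .
  define Hk where "Hk = ln (cu * Gk)"
  have IH: "Hk \<le> (1+u)^k * phi - 2^k * l / 2" using Suc.IH unfolding Hk_def Gk_def P_def ok_def .
  have lnok: "ln ok = - (2^k * l)" unfolding ok_def l_def using rp by (simp add: ln_realpow)
  define R where "R = (1+u) * Hk + (1-u) * ln ok"
  have HkE: "Hk = ln cu + ln Gk" unfolding Hk_def using cu1 Gk by (simp add: ln_mult)
  have b1: "cu * gn g K (mpow K A (2^Suc k)) \<le> exp R"
  proof -
    have "cu * gn g K (mpow K A (2^Suc k)) \<le> cu * (cS g * (Gk powr (1 + u) * ok powr (1 - u)))"
      using s1 cu1 by (intro mult_left_mono) auto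
    also have "\<dots> = exp (ln cu + ln (cS g) + (1+u) * ln Gk + (1-u) * ln ok)"
      using cu1 cSp Gk okp by (simp add: exp_add powr_def)
    also have "ln cu + ln (cS g) + (1+u) * ln Gk + (1-u) * ln ok = R"
      unfolding R_def HkE lncu by (simp add: algebra_simps)
    finally show ?thesis .
  qed
  have b2: "cu * r^(2^Suc k) \<le> exp R"
  proof -
    have rr: "r^(2^Suc k) = ok^2" unfolding ok_def by (simp add: power_mult[symmetric] mult.commute)
    have "exp (ln cu + 2 * ln ok) = exp (ln cu + ln ok + ln ok)" by (simp add: algebra_simps)
    also have "\<dots> = exp (ln cu) * exp (ln ok) * exp (ln ok)" by (simp only: exp_add)
    also have "\<dots> = cu * ok^2" using cu1 okp by (simp add: power2_eq_square)
    finally have "cu * r^(2^Suc k) = exp (ln cu + 2 * ln ok)" unfolding rr by simp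
    also have "ln cu + 2 * ln ok \<le> R"
    proof -
      have "ln ok \<le> ln Gk" using Gk okp by simp
      moreover have "ln cu \<ge> 0" using cu1 by simp
      ultimately have "0 \<le> u * ln cu + (1+u) * (ln Gk - ln ok)" using u by (intro add_nonneg_nonneg mult_nonneg_nonneg) auto
      then show ?thesis unfolding R_def HkE by (simp add: algebra_simps)
    qed
    finally show ?thesis by simp
  qed
  have "0 < r^(2^Suc k)" using rp by simp
  hence "0 < max (gn g K (mpow K A (2^Suc k))) (r^(2^Suc k))" by (simp add: less_max_iff_disj)
  hence pos: "0 < cu * max (gn g K (mpow K A (2^Suc k))) (r^(2^Suc k))" using cu1 by (intro mult_pos_pos) auto
  have "cu * max (gn g K (mpow K A (2^Suc k))) (r^(2^Suc k)) \<le> exp R"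
    using b1 b2 by (simp add: max_def)
  hence "ln (cu * max (gn g K (mpow K A (2^Suc k))) (r^(2^Suc k))) \<le> ln (exp R)"
    using pos by (intro ln_mono) auto
  hence "ln (cu * max (gn g K (mpow K A (2^Suc k))) (r^(2^Suc k))) \<le> R" by simp
  also have "R \<le> (1+u)^Suc k * phi - 2^Suc k * l / 2"
  proof -
    have l0: "l > 0" unfolding l_def using r by simp
    define t where "t = 2^k * l"
    define Pk where "Pk = (1+u)^k * phi"
    have t0: "t \<ge> 0" unfolding t_def using l0 by simp
    have IH': "Hk \<le> Pk - t/2" using IH unfolding t_def Pk_def by simp
    have "(1+u) * Hk \<le> (1+u) * (Pk - t/2)" using IH' u by (intro mult_left_mono) auto
    also have "(1+u) * (Pk - t/2) = (1+u) * Pk - t/2 - u*t/2" by (simp add: algebra_simps)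
    finally have h1: "(1+u) * Hk \<le> (1+u) * Pk - t/2 - u*t/2" .
    have h2: "u*t \<le> t" using mult_right_mono[of u 1 t] t0 u by simp
    have Re: "R = (1+u) * Hk - t + u*t" unfolding R_def lnok t_def by (simp add: algebra_simps)
    have e1: "(1+u)^Suc k * phi = (1+u) * Pk" unfolding Pk_def by simp
    have e2: "2^Suc k * l / 2 = t" unfolding t_def by simp
    show ?thesis unfolding e1 e2 Re using h1 h2 by linarith
  qed
  finally show ?case .
qed



lemma exists_k:
  fixes a q l phi d :: real
  assumes a: "a > 1" and q: "q > 1" and l: "l > 0"
  shows "\<exists>k. a^k * phi - a^k * q^k * l / 2 \<le> d"
proof -
  obtain k1 where k1: "2 * (phi + 1) / l < q^k1" using real_arch_pow[OF q] by blast
  obtain k2 where k2: "\<bar>d\<bar> < a^k2" using real_arch_pow[OF a] by blast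
  let ?k = "k1 + k2"
  have "q^k1 \<le> q^?k" using q by (intro power_increasing) auto
  hence "2 * (phi + 1) / l < q^?k" using k1 by linarith
  hence "2 * (phi + 1) < q^?k * l" using l by (simp add: divide_less_eq)
  hence h: "phi - q^?k * l / 2 \<le> -1" by simp
  have ak: "a^?k \<ge> a^k2" using a by (intro power_increasing) auto
  have ap: "a^?k > 0" using a by simp
  have "a^?k * phi - a^?k * q^?k * l / 2 = a^?k * (phi - q^?k * l / 2)" by (simp add: algebra_simps)
  also have "\<dots> \<le> a^?k * (-1)" using h ap by (intro mult_left_mono) auto
  also have "\<dots> \<le> d" using ak k2 by linarith
  finally show ?thesis by blast
qed

lemma exists_small:
  assumes g: "g > 1" and r: "1/2 \<le> r" "r < 1" and G: "G > 0" and d: "d > 0"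
  shows "\<exists>p>0. \<forall>K A. 0 < K \<longrightarrow> symm K A \<longrightarrow> opb K A r \<longrightarrow> gn g K A \<le> G \<longrightarrow> gn g K (mpow K A p) \<le> d"
proof -
  define u where "u = uu g"
  define cu where "cu = cS g powr (1 / uu g)"
  define l where "l = - ln r"
  define phi where "phi = ln cu + ln (max G 1) + l/2"
  have u: "0 < u" "u < 1" unfolding u_def using uu_bounds[OF g] by auto
  have l: "l > 0" unfolding l_def using r by simp
  have cu1: "cu \<ge> 1" unfolding cu_def using cS_ge1[OF g] uu_bounds[OF g] by (simp add: ge_one_powr_ge_zero)
  have a: "1 + u > 1" using u by simp
  have q: "2/(1+u) > 1" using u by simp
  obtain k where k: "(1+u)^k * phi - (1+u)^k * (2/(1+u))^k * l / 2 \<le> ln d"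
    using exists_k[OF a q l] by blast
  have "(1+u) * (2/(1+u)) = 2" using u by (simp add: field_simps)
  hence "(1+u)^k * (2/(1+u))^k = 2^k" by (metis power_mult_distrib)
  hence k': "(1+u)^k * phi - 2^k * l / 2 \<le> ln d" using k by (metis mult.assoc)
  show ?thesis
  proof (intro exI[of _ "2^k"] conjI allI impI)
    show "(0::nat) < 2^k" by simp
    fix K A assume K: "0 < K" and A: "symm K A" "opb K A r" "gn g K A \<le> G"
    have "ln (cu * max (gn g K (mpow K A (2^k))) (r^(2^k))) \<le> (1+u)^k * phi - 2^k * l / 2"
      using iter_log[OF g K A r G, of k] unfolding u_def cu_def l_def phi_def by simp
    also have "\<dots> \<le> ln d" by (rule k')
    finally have lnle: "ln (cu * max (gn g K (mpow K A (2^k))) (r^(2^k))) \<le> ln d" .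
    have rp: "0 < r^(2^k)" using r by simp
    hence mp: "0 < max (gn g K (mpow K A (2^k))) (r^(2^k))" by (simp add: less_max_iff_disj)
    hence "0 < cu * max (gn g K (mpow K A (2^k))) (r^(2^k))" using cu1 by simp
    hence "cu * max (gn g K (mpow K A (2^k))) (r^(2^k)) \<le> d" using lnle d by simp
    moreover have "gn g K (mpow K A (2^k)) \<le> cu * max (gn g K (mpow K A (2^k))) (r^(2^k))"
    proof -
      have "gn g K (mpow K A (2^k)) \<le> max (gn g K (mpow K A (2^k))) (r^(2^k))" by simp
      also have "\<dots> \<le> cu * max (gn g K (mpow K A (2^k))) (r^(2^k))"
        using mult_right_mono[OF cu1, of "max (gn g K (mpow K A (2^k))) (r^(2^k))"] mp by simp
      finally show ?thesis .
    qed
    ultimately show "gn g K (mpow K A (2^k)) \<le> d" by linarith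
  qed
qed



definition quad :: "nat \<Rightarrow> rmat \<Rightarrow> (nat \<Rightarrow> real) \<Rightarrow> real" where
  "quad K C x = (\<Sum>i<K. x i * mv K C x i)"
definition bil :: "nat \<Rightarrow> rmat \<Rightarrow> (nat \<Rightarrow> real) \<Rightarrow> (nat \<Rightarrow> real) \<Rightarrow> real" where
  "bil K C y x = (\<Sum>i<K. y i * mv K C x i)"

lemma bil_sym: assumes "symm K C" shows "bil K C y x = bil K C x y"
proof -
  have "bil K C y x = (\<Sum>i<K. \<Sum>j<K. y i * C i j * x j)"
    unfolding bil_def mv_def by (simp add: sum_distrib_left mult.assoc)
  also have "\<dots> = (\<Sum>j<K. \<Sum>i<K. y i * C i j * x j)" by (rule sum.swap)
  also have "\<dots> = (\<Sum>j<K. \<Sum>i<K. x j * C j i * y i)"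
    using assms unfolding symm_def by (intro sum.cong refl) (auto simp: mult.commute mult.left_commute)
  also have "\<dots> = bil K C x y"
    unfolding bil_def mv_def by (simp add: sum_distrib_left mult.assoc)
  finally show ?thesis .
qed

lemma mv_lin: "mv K C (\<lambda>i. x i + t * y i) i = mv K C x i + t * mv K C y i"
  unfolding mv_def by (simp add: algebra_simps sum.distrib sum_distrib_left)

lemma quad_add: assumes "symm K C"
  shows "quad K C (\<lambda>i. x i + t * y i) = quad K C x + 2 * t * bil K C y x + t^2 * quad K C y"
proof -
  have "quad K C (\<lambda>i. x i + t * y i) = (\<Sum>i<K. x i * mv K C x i) + t * (\<Sum>i<K. x i * mv K C y i) + t * (\<Sum>i<K. y i * mv K C x i) + t^2 * (\<Sum>i<K. y i * mv K C y i)"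
    unfolding quad_def mv_lin by (simp add: algebra_simps sum.distrib sum_distrib_left power2_eq_square)
  also have "(\<Sum>i<K. x i * mv K C y i) = bil K C y x"
    using bil_sym[OF assms, of x y] unfolding bil_def by simp
  finally show ?thesis unfolding quad_def bil_def by (simp add: algebra_simps)
qed

lemma cs_psd:
  assumes S: "symm K C" and P: "\<And>z. 0 \<le> quad K C z"
  shows "(bil K C y x)^2 \<le> quad K C x * quad K C y"
proof -
  let ?a = "quad K C y" and ?b = "bil K C y x" and ?c = "quad K C x"
  have H: "0 \<le> ?c + 2 * t * ?b + t^2 * ?a" for t
    using P[of "\<lambda>i. x i + t * y i"] quad_add[OF S, of x t y] by simp
  have a0: "?a \<ge> 0" by (rule P)
  show ?thesis
  proof (cases "?a = 0")
    case True
    have "?b = 0"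
    proof (rule ccontr)
      assume b: "?b \<noteq> 0"
      have "0 \<le> ?c + 2 * (-(?c+1)/(2*?b)) * ?b + (-(?c+1)/(2*?b))^2 * ?a" by (rule H)
      also have "\<dots> = -1" using b True by (simp add: field_simps)
      finally show False by simp
    qed
    then show ?thesis using True by simp
  next
    case False
    hence a: "?a > 0" using a0 by simp
    have "0 \<le> ?c + 2 * (-?b/?a) * ?b + (-?b/?a)^2 * ?a" by (rule H)
    also have "\<dots> = ?c - ?b^2 / ?a" using a by (simp add: field_simps power2_eq_square)
    finally have "?b^2 / ?a \<le> ?c" by simp
    then show ?thesis using a by (simp add: divide_le_eq mult.commute)
  qed
qed

lemma sq_eq_bil: "sq K (mv K C x) = bil K C (mv K C x) x"
  unfolding sq_def bil_def by (simp add: power2_eq_square)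

lemma sq_nonneg: "0 \<le> sq K x" unfolding sq_def by (intro sum_nonneg) auto

lemma opb_of_quad:
  assumes S: "symm K C" and Q: "\<And>x. 0 \<le> quad K C x \<and> quad K C x \<le> r * sq K x" and r: "r \<ge> 0"
  shows "opb K C r"
  unfolding opb_def
proof
  fix x
  let ?y = "mv K C x"
  have "(sq K ?y)^2 = (bil K C ?y x)^2" by (simp add: sq_eq_bil)
  also have "\<dots> \<le> quad K C x * quad K C ?y" by (rule cs_psd[OF S]) (use Q in blast)
  also have "\<dots> \<le> (r * sq K x) * (r * sq K ?y)"
    using Q[of x] Q[of ?y] by (intro mult_mono) auto
  finally have h: "(sq K ?y)^2 \<le> r^2 * sq K x * sq K ?y" by (simp add: power2_eq_square algebra_simps)
  show "sq K ?y \<le> r^2 * sq K x"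
  proof (cases "sq K ?y = 0")
    case True then show ?thesis using sq_nonneg[of K x] by simp
  next
    case False
    hence p: "sq K ?y > 0" using sq_nonneg[of K ?y] by simp
    from h have "sq K ?y * sq K ?y \<le> (r^2 * sq K x) * sq K ?y" by (simp add: power2_eq_square)
    then show ?thesis using p by simp
  qed
qed

lemma symm_idm: "symm K idm" unfolding symm_def idm_def by auto

lemma mv_idm: "i < K \<Longrightarrow> mv K idm x i = x i"
  unfolding mv_def idm_def using delta_l[where i=i and K=K and f=x] by simp

lemma quad_idm: "quad K idm x = sq K x"
  unfolding quad_def sq_def by (auto intro!: sum.cong simp: mv_idm power2_eq_square)

lemma cs_plain: "(\<Sum>i<K. y i * x i)^2 \<le> sq K x * sq K y"
proof -
  have "(\<Sum>i<K. y i * x i) = bil K idm y x" unfolding bil_def by (auto intro!: sum.cong simp: mv_idm)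
  then show ?thesis using cs_psd[OF symm_idm, of K y x] by (simp add: quad_idm sq_nonneg)
qed

lemma mv_inv: assumes "eqK K (mm K b X) idm" "i < K"
  shows "mv K b (mv K X z) i = z i"
proof -
  have "mv K b (mv K X z) i = mv K (mm K b X) z i" by (simp add: mv_mm)
  also have "\<dots> = mv K idm z i" unfolding mv_def using assms unfolding eqK_def by auto
  finally show ?thesis using mv_idm[OF assms(2)] by simp
qed

lemma opb_inv:
  assumes m: "m > 0" and L: "\<And>x. m * sq K x \<le> quad K b x" and E: "eqK K (mm K b X) idm"
  shows "opb K X (1/m)"
  unfolding opb_def
proof
  fix z
  let ?y = "mv K X z"
  have "quad K b ?y = (\<Sum>i<K. ?y i * z i)" unfolding quad_def using mv_inv[OF E] by (auto intro!: sum.cong)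
  hence l1: "m * sq K ?y \<le> (\<Sum>i<K. ?y i * z i)" using L[of ?y] by simp
  have "0 \<le> m * sq K ?y" using m sq_nonneg[of K ?y] by simp
  hence "(m * sq K ?y)^2 \<le> (\<Sum>i<K. ?y i * z i)^2" using l1 by (intro power_mono) auto
  also have "\<dots> \<le> sq K z * sq K ?y" by (rule cs_plain[where K=K and y="?y" and x=z])
  finally have "(m * sq K ?y)^2 \<le> sq K z * sq K ?y" .
  hence h: "m^2 * sq K ?y * sq K ?y \<le> sq K z * sq K ?y" by (simp add: power2_eq_square algebra_simps)
  show "sq K ?y \<le> (1/m)^2 * sq K z"
  proof (cases "sq K ?y = 0")
    case True then show ?thesis using sq_nonneg[of K z] by simp
  next
    case False
    hence p: "sq K ?y > 0" using sq_nonneg[of K ?y] by simp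
    hence "m^2 * sq K ?y \<le> sq K z" using h by simp
    then show ?thesis using m by (simp add: field_simps power2_eq_square)
  qed
qed

lemma diag_lower:
  assumes S: "symm K b" and P: "\<And>z. 0 \<le> quad K b z" and E: "eqK K (mm K b X) idm" and i: "i < K"
  shows "1 \<le> X i i * b i i"
proof -
  let ?y = "\<lambda>k. X k i" and ?e = "\<lambda>k. if k = i then 1 else (0::real)"
  have mve: "mv K b ?e k = b k i" for k unfolding mv_def using delta_r[where f="\<lambda>j. b k j" and K=K and j=i] i by simp
  have mvy: "mv K b ?y k = (if k = i then 1 else 0)" if k: "k < K" for k
    using E k i unfolding mv_def eqK_def mm_def idm_def by auto
  have "bil K b ?y ?e = (\<Sum>k<K. X k i * b k i)" unfolding bil_def mve ..
  also have "\<dots> = (\<Sum>k<K. b i k * X k i)" using S i unfolding symm_def by (intro sum.cong) auto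
  also have "\<dots> = 1" using E i unfolding eqK_def mm_def idm_def by auto
  finally have b1: "bil K b ?y ?e = 1" .
  have qe: "quad K b ?e = b i i" unfolding quad_def mve
  proof -
    have "(\<Sum>k<K. ?e k * b k i) = (\<Sum>k<K. if k = i then b k i else 0)" by (rule sum.cong) auto
    also have "\<dots> = b i i" using i by (simp only: sum.delta finite_lessThan lessThan_iff) simp
    finally show "(\<Sum>k<K. ?e k * b k i) = b i i" .
  qed
  have qy: "quad K b ?y = X i i" unfolding quad_def
  proof -
    have "(\<Sum>k<K. X k i * mv K b ?y k) = (\<Sum>k<K. X k i * (if k = i then 1 else 0))"
      using mvy by (intro sum.cong) auto
    then show "(\<Sum>k<K. X k i * mv K b ?y k) = X i i" using delta_r[where f="\<lambda>k. X k i" and K=K and j=i] i by simp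
  qed
  have "(bil K b ?y ?e)^2 \<le> quad K b ?e * quad K b ?y" by (rule cs_psd[OF S P])
  then show ?thesis using b1 qe qy by (simp add: mult.commute)
qed



lemma geom_half: "(\<Sum>q<Q. (1/2::real)^q) \<le> 2"
proof -
  have "(\<Sum>q<Q. (1/2::real)^q) = 2 - 2 * (1/2)^Q"
    by (induction Q) (auto simp: field_simps)
  then show ?thesis by simp
qed

lemma sum_div_block: assumes p: "p > 0"
  shows "(\<Sum>n<p*Q. f (n div p)) = real p * (\<Sum>q<Q. f q :: real)"
proof (induction Q)
  case 0 then show ?case by simp
next
  case (Suc Q)
  have s: "{..<p * Suc Q} = {..<p*Q} \<union> {p*Q..<p*Q+p}" by (auto simp: algebra_simps)
  have "(\<Sum>n<p * Suc Q. f (n div p)) = (\<Sum>n<p*Q. f (n div p)) + (\<Sum>n\<in>{p*Q..<p*Q+p}. f (n div p))"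
    unfolding s by (rule sum.union_disjoint) auto
  also have "(\<Sum>n\<in>{p*Q..<p*Q+p}. f (n div p)) = (\<Sum>n\<in>{p*Q..<p*Q+p}. f Q)"
  proof (rule sum.cong)
    fix n assume "n \<in> {p*Q..<p*Q+p}"
    then obtain s where "n = p*Q + s" "s < p" by (metis atLeastLessThan_iff le_Suc_ex add_less_cancel_left)
    then show "f (n div p) = f Q" using p by simp
  qed simp
  finally show ?case using Suc.IH by (simp add: algebra_simps)
qed

lemma sum_div_geom: assumes p: "p > 0"
  shows "(\<Sum>n<N. (1/2::real)^(n div p)) \<le> 2 * real p"
proof -
  have "(\<Sum>n<N. (1/2::real)^(n div p)) \<le> (\<Sum>n<p*N. (1/2::real)^(n div p))"
    using p by (intro sum_mono2) auto
  also have "\<dots> = real p * (\<Sum>q<N. (1/2::real)^q)" by (rule sum_div_block[OF p])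
  also have "\<dots> \<le> real p * 2" using geom_half[of N] by (intro mult_left_mono) auto
  finally show ?thesis by simp
qed

lemma gn_idm: assumes "0 < K" "g \<ge> 0" shows "gn g K idm \<le> 1"
  using assms by (intro gn_le) (auto simp: idm_def vw_diag)

lemma Sg_pos: "g > 1 \<Longrightarrow> Sg g > 0"
proof -
  assume "g > 1"
  hence "2 / (g - 1) > 0" by simp
  then show ?thesis unfolding Sg_def by linarith
qed

lemma gn_mpow_bound:
  assumes g: "g > 1" and K: "0 < K" and G: "gn g K A \<le> G" "G \<ge> 1"
  shows "gn g K (mpow K A s) \<le> (2 * 2 powr g * Sg g * G)^s"
proof (induction s)
  case 0 then show ?case using gn_idm[OF K] g by simp
next
  case (Suc s)
  let ?c = "2 * 2 powr g * Sg g"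
  have c0: "?c \<ge> 0" using g Sg_pos[OF g] by simp
  have "gn g K (mpow K A (Suc s)) \<le> ?c * gn g K A * gn g K (mpow K A s)"
    using gn_mm[OF g K] by simp
  also have "\<dots> \<le> ?c * G * (?c * G)^s"
    using Suc.IH G c0 Sg_pos[OF g] gn_nonneg[OF K, of g A] gn_nonneg[OF K, of g "mpow K A s"] g
    by (intro mult_mono) auto
  finally show ?case by simp
qed

lemma neumann:
  assumes E: "eqK K (mm K b X) idm" and M: "M > 0"
  defines "A \<equiv> \<lambda>i j. idm i j - b i j / M"
  shows "i < K \<Longrightarrow> j < K \<Longrightarrow> X i j = (1/M) * (\<Sum>n<N. mpow K A n i j) + mm K (mpow K A N) X i j"
proof (induction N arbitrary: i)
  case 0
  then show ?case using mm_idm_left[of K X] unfolding eqK_def by simp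
next
  case (Suc N)
  have f1: "X k j = idm k j / M + mm K A X k j" if k: "k < K" for k
  proof -
    have "mm K A X k j = (\<Sum>l<K. idm k l * X l j) - (\<Sum>l<K. b k l * X l j) / M"
      unfolding A_def mm_def by (simp add: algebra_simps sum_subtractf sum_divide_distrib)
    also have "(\<Sum>l<K. idm k l * X l j) = X k j" unfolding idm_def using delta_l[where i=k and K=K and f="\<lambda>l. X l j"] k by simp
    also have "(\<Sum>l<K. b k l * X l j) = idm k j" using E k Suc.prems unfolding eqK_def mm_def by auto
    finally show ?thesis by simp
  qed
  let ?P = "mpow K A N"
  have "mm K ?P X i j = (\<Sum>k<K. ?P i k * X k j)" by (simp add: mm_def)
  also have "\<dots> = (\<Sum>k<K. ?P i k * (idm k j / M + mm K A X k j))"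
  proof (rule sum.cong)
    fix k assume "k \<in> {..<K}"
    then show "?P i k * X k j = ?P i k * (idm k j / M + mm K A X k j)" using f1[of k] by simp
  qed simp
  also have "\<dots> = (\<Sum>k<K. ?P i k * idm k j) / M + (\<Sum>k<K. ?P i k * mm K A X k j)"
    by (simp add: algebra_simps sum.distrib sum_divide_distrib)
  also have "(\<Sum>k<K. ?P i k * mm K A X k j) = mm K ?P (mm K A X) i j"
    by (simp only: mm_def[of K ?P "mm K A X"])
  also have "(\<Sum>k<K. ?P i k * idm k j) = ?P i j"
    unfolding idm_def using delta_r[where f="\<lambda>k. ?P i k" and K=K and j=j] Suc.prems by simp
  also have "mm K ?P (mm K A X) i j = mm K (mm K ?P A) X i j" by (simp add: mm_assoc)
  also have "\<dots> = mm K (mpow K A (Suc N)) X i j"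
    using mm_cong[OF eqK_sym[OF mpow_Suc'[of K A N]] eqK_refl[of K X]] Suc.prems unfolding eqK_def by auto
  finally have "mm K ?P X i j = ?P i j / M + mm K (mpow K A (Suc N)) X i j" .
  then show ?case using Suc.IH[OF Suc.prems] by (simp add: algebra_simps)
qed

lemma limit_le: fixes x a c r :: real
  assumes "\<And>N. x \<le> a + c * r^N" "0 \<le> r" "r < 1" "c \<ge> 0"
  shows "x \<le> a"
proof (rule ccontr)
  assume "\<not> x \<le> a"
  hence d: "x - a > 0" by simp
  show False
  proof (cases "c = 0")
    case True then show False using assms(1)[of 0] d by simp
  next
    case False
    hence c: "c > 0" using assms(4) by simp
    obtain N where "r^N < (x - a)/c" using real_arch_pow_inv[of "(x-a)/c" r] d c assms(3) by auto
    hence "c * r^N < x - a" using c by (simp add: field_simps)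
    then show False using assms(1)[of N] by simp
  qed
qed



lemma Sg_ge1: "g > 1 \<Longrightarrow> Sg g \<ge> 1"
proof -
  assume "g > 1"
  hence "2 / (g - 1) > 0" by simp
  then show ?thesis unfolding Sg_def by linarith
qed

theorem jaffard:
  assumes g: "g > 1" and m: "0 < m" "m \<le> M" and kap: "\<kappa> \<ge> 0"
  shows "\<exists>C. \<forall>K b X i j. 0 < K \<longrightarrow> symm K b \<longrightarrow>
     (\<forall>x. m * sq K x \<le> quad K b x \<and> quad K b x \<le> M * sq K x) \<longrightarrow>
     (\<forall>i<K. \<forall>j<K. \<bar>b i j\<bar> * vw g i j \<le> \<kappa>) \<longrightarrow>
     eqK K (mm K b X) idm \<longrightarrow> i < K \<longrightarrow> j < K \<longrightarrow> \<bar>X i j\<bar> * vw g i j \<le> C"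
proof -
  have Mp: "M > 0" using m by simp
  define r where "r = max (1 - m/M) (1/2)"
  have r: "1/2 \<le> r" "r < 1" unfolding r_def using m Mp by auto
  define G where "G = 1 + \<kappa>/M"
  have G1: "G \<ge> 1" unfolding G_def using kap Mp by simp
  define cA where "cA = 2 * 2 powr g * Sg g"
  have cA1: "cA \<ge> 1"
  proof -
    have "2 powr g * Sg g \<ge> 1 * 1" using Sg_ge1[OF g] g by (intro mult_mono) (auto simp: ge_one_powr_ge_zero)
    then show ?thesis unfolding cA_def by simp
  qed
  define d where "d = 1 / (2 * cA)"
  have dp: "d > 0" unfolding d_def using cA1 by simp
  obtain p where p: "p > 0" and P: "\<And>K A. 0 < K \<Longrightarrow> symm K A \<Longrightarrow> opb K A r \<Longrightarrow> gn g K A \<le> G \<Longrightarrow> gn g K (mpow K A p) \<le> d"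
    using exists_small[OF g r _ dp, of G] G1 by auto
  define \<beta> where "\<beta> = (cA * G)^p"
  have cAG: "cA * G \<ge> 1" using cA1 G1 by (metis mult_mono' mult_1 zero_le_one order_trans)
  show ?thesis
  proof (intro exI[of _ "(1/M) * (\<beta> * (2 * real p))"] allI impI)
    fix K b X i j
    assume K: "0 < K" and S: "symm K b" and Q: "\<forall>x. m * sq K x \<le> quad K b x \<and> quad K b x \<le> M * sq K x"
      and D: "\<forall>i<K. \<forall>j<K. \<bar>b i j\<bar> * vw g i j \<le> \<kappa>" and E: "eqK K (mm K b X) idm" and ij: "i < K" "j < K"
    define A where "A = (\<lambda>i j. idm i j - b i j / M)"
    have SA: "symm K A" using S unfolding A_def symm_def idm_def by auto
    have mvA: "mv K A x k = x k - mv K b x k / M" if "k < K" for x k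
    proof -
      have "mv K A x k = mv K idm x k - mv K b x k / M"
        unfolding A_def mv_def by (simp add: algebra_simps sum_subtractf sum_divide_distrib)
      then show ?thesis using mv_idm[OF that] by simp
    qed
    have qA: "quad K A x = sq K x - quad K b x / M" for x
    proof -
      have "quad K A x = (\<Sum>k<K. x k * (x k - mv K b x k / M))"
        unfolding quad_def by (intro sum.cong) (auto simp: mvA)
      also have "\<dots> = sq K x - quad K b x / M"
        unfolding sq_def quad_def by (simp add: algebra_simps sum_subtractf sum_divide_distrib power2_eq_square)
      finally show ?thesis .
    qed
    have opA: "opb K A r"
    proof (rule opb_of_quad[OF SA])
      fix x
      have h1: "m * sq K x \<le> quad K b x" "quad K b x \<le> M * sq K x" using Q by auto
      have s0: "sq K x \<ge> 0" by (rule sq_nonneg)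
      have "quad K b x / M \<le> sq K x" using h1(2) Mp by (simp add: divide_le_eq mult.commute)
      moreover have "m/M * sq K x \<le> quad K b x / M" using h1(1) Mp by (simp add: divide_right_mono)
      moreover have "(1 - m/M) * sq K x \<le> r * sq K x" unfolding r_def using s0 by (intro mult_right_mono) auto
      ultimately show "0 \<le> quad K A x \<and> quad K A x \<le> r * sq K x" unfolding qA by (auto simp: algebra_simps)
    qed (use r in auto)
    have gA: "gn g K A \<le> G"
    proof (rule gn_le[OF K])
      fix i j assume ij: "i < K" "j < K"
      have a1: "\<bar>A i j\<bar> \<le> \<bar>idm i j\<bar> + \<bar>b i j\<bar> / M"
        unfolding A_def using abs_triangle_ineq4[of "idm i j" "b i j / M"] Mp by simp
      have "\<bar>A i j\<bar> * vw g i j \<le> (\<bar>idm i j\<bar> + \<bar>b i j\<bar> / M) * vw g i j"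
        using a1 vw_ge1[of g i j] g by (intro mult_right_mono) auto
      also have "\<dots> = \<bar>idm i j\<bar> * vw g i j + (\<bar>b i j\<bar> * vw g i j) / M" by (simp add: algebra_simps)
      finally have "\<bar>A i j\<bar> * vw g i j \<le> \<bar>idm i j\<bar> * vw g i j + (\<bar>b i j\<bar> * vw g i j) / M" .
      also have "\<bar>idm i j\<bar> * vw g i j \<le> 1" by (auto simp: idm_def vw_diag)
      also have "(\<bar>b i j\<bar> * vw g i j) / M \<le> \<kappa> / M" using D ij Mp by (simp add: divide_right_mono)
      finally show "\<bar>A i j\<bar> * vw g i j \<le> G" unfolding G_def by simp
    qed
    have small: "gn g K (mpow K A p) \<le> d" by (rule P[OF K SA opA gA])
    have blocks: "gn g K (mpow K A (q*p)) \<le> (1/2)^q / cA" if q: "q \<ge> 1" for q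
      using q
    proof (induction q rule: dec_induct)
      case base then show ?case using small unfolding d_def by simp
    next
      case (step q)
      have "gn g K (mpow K A (Suc q * p)) = gn g K (mm K (mpow K A (q*p)) (mpow K A p))"
        using gn_cong[OF mpow_add[of K A "q*p" p]] by (simp add: add.commute)
      also have "\<dots> \<le> cA * gn g K (mpow K A (q*p)) * gn g K (mpow K A p)"
        using gn_mm[OF g K] unfolding cA_def by simp
      also have "\<dots> \<le> cA * ((1/2)^q / cA) * d"
        using step.IH small cA1 gn_nonneg[OF K, of g "mpow K A (q*p)"] gn_nonneg[OF K, of g "mpow K A p"] g
        by (intro mult_mono) auto
      also have "\<dots> = (1/2)^Suc q / cA" unfolding d_def using cA1 by (simp add: field_simps)
      finally show ?case .
    qed
    have pw: "gn g K (mpow K A s) \<le> (cA * G)^s" for s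
      using gn_mpow_bound[OF g K gA G1] unfolding cA_def by simp
    have allb: "gn g K (mpow K A n) \<le> \<beta> * (1/2)^(n div p)" for n
    proof -
      define q where "q = n div p"
      define s where "s = n mod p"
      have n: "n = q*p + s" unfolding q_def s_def by simp
      have sp: "s < p" unfolding s_def using p by simp
      have ps: "(cA * G)^s \<le> \<beta>" unfolding \<beta>_def using sp cAG by (intro power_increasing) auto
      show ?thesis
      proof (cases "q = 0")
        case True
        then show ?thesis using pw[of n] ps n unfolding q_def by simp
      next
        case False
        have "gn g K (mpow K A n) = gn g K (mm K (mpow K A (q*p)) (mpow K A s))"
          unfolding n by (rule gn_cong[OF mpow_add])
        also have "\<dots> \<le> cA * gn g K (mpow K A (q*p)) * gn g K (mpow K A s)"
          using gn_mm[OF g K] unfolding cA_def by simp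
        also have "\<dots> \<le> cA * ((1/2)^q / cA) * \<beta>"
          using blocks[of q] False pw[of s] ps cA1 gn_nonneg[OF K, of g "mpow K A (q*p)"] gn_nonneg[OF K, of g "mpow K A s"] g
          by (intro mult_mono) auto
        also have "\<dots> = \<beta> * (1/2)^(n div p)" using cA1 unfolding q_def by simp
        finally show ?thesis .
      qed
    qed
    have sumb: "(\<Sum>n<N. \<bar>mpow K A n i j\<bar> * vw g i j) \<le> \<beta> * (2 * real p)" for N
    proof -
      have "(\<Sum>n<N. \<bar>mpow K A n i j\<bar> * vw g i j) \<le> (\<Sum>n<N. \<beta> * (1/2)^(n div p))"
        using gn_ge[OF ij] allb by (intro sum_mono) (meson order_trans)
      also have "\<dots> = \<beta> * (\<Sum>n<N. (1/2)^(n div p))" by (simp add: sum_distrib_left)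
      also have "\<dots> \<le> \<beta> * (2 * real p)"
        using sum_div_geom[OF p, of N] cAG unfolding \<beta>_def by (intro mult_left_mono) auto
      finally show ?thesis .
    qed
    have opX: "opb K X (1/m)" by (rule opb_inv[OF m(1) _ E]) (use Q in blast)
    have bound: "\<bar>X i j\<bar> * vw g i j \<le> (1/M) * (\<beta> * (2 * real p)) + (vw g i j / m) * r^N" for N
    proof -
      have XN: "X i j = (1/M) * (\<Sum>n<N. mpow K A n i j) + mm K (mpow K A N) X i j"
        using neumann[OF E Mp ij, of N] unfolding A_def by simp
      have op2: "opb K (mm K (mpow K A N) X) (r^N * (1/m))" by (rule opb_mm[OF opb_mpow[OF opA] opX])
      have e2: "\<bar>mm K (mpow K A N) X i j\<bar> \<le> r^N * (1/m)"
        by (rule opb_entry[OF op2 _ ij]) (use r m in auto)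
      have "\<bar>X i j\<bar> \<le> (1/M) * (\<Sum>n<N. \<bar>mpow K A n i j\<bar>) + \<bar>mm K (mpow K A N) X i j\<bar>"
      proof -
        have "\<bar>X i j\<bar> \<le> \<bar>(1/M) * (\<Sum>n<N. mpow K A n i j)\<bar> + \<bar>mm K (mpow K A N) X i j\<bar>"
          by (subst XN) (rule abs_triangle_ineq)
        also have "\<bar>(1/M) * (\<Sum>n<N. mpow K A n i j)\<bar> = (1/M) * \<bar>(\<Sum>n<N. mpow K A n i j)\<bar>"
          using Mp by (simp add: abs_mult)
        also have "(1/M) * \<bar>(\<Sum>n<N. mpow K A n i j)\<bar> \<le> (1/M) * (\<Sum>n<N. \<bar>mpow K A n i j\<bar>)"
          using Mp by (intro mult_left_mono sum_abs) auto
        finally show ?thesis by simp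
      qed
      hence "\<bar>X i j\<bar> * vw g i j \<le> ((1/M) * (\<Sum>n<N. \<bar>mpow K A n i j\<bar>) + \<bar>mm K (mpow K A N) X i j\<bar>) * vw g i j"
        using vw_ge1[of g i j] g by (intro mult_right_mono) auto
      also have "\<dots> = (1/M) * (\<Sum>n<N. \<bar>mpow K A n i j\<bar> * vw g i j) + \<bar>mm K (mpow K A N) X i j\<bar> * vw g i j"
        by (simp add: algebra_simps sum_distrib_right sum_distrib_left)
      also have "\<dots> \<le> (1/M) * (\<beta> * (2 * real p)) + (r^N * (1/m)) * vw g i j"
        using sumb[of N] e2 Mp vw_ge1[of g i j] g by (intro add_mono mult_left_mono mult_right_mono) auto
      finally show ?thesis by (simp add: algebra_simps)
    qed
    show "\<bar>X i j\<bar> * vw g i j \<le> (1/M) * (\<beta> * (2 * real p))"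
      by (rule limit_le[OF bound]) (use r m vw_ge1[of g i j] g in auto)
  qed
qed



definition Gt :: "real \<Rightarrow> real \<Rightarrow> real" where "Gt t s = (1 - exp (- s * t)) / s"
definition Rn :: "real \<Rightarrow> nat \<Rightarrow> real \<Rightarrow> real" where
  "Rn t n s = (t / n) * (\<Sum>k<n. exp (- s * (real k * t / n)))"

lemma Rn_closed: assumes s: "s > 0" and t: "t > 0" and n: "n > 0"
  shows "Rn t n s = (t/n) * (1 - exp (- s * t)) / (1 - exp (- (s * t / n)))"
proof -
  define x where "x = exp (- (s * t / n))"
  have x1: "x < 1" unfolding x_def using s t n by simp
  have ek: "exp (- s * (real k * t / n)) = x^k" for k
    unfolding x_def by (simp add: exp_of_nat_mult[symmetric] algebra_simps)
  have xn: "x^n = exp (- s * t)"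
    unfolding x_def using n by (simp add: exp_of_nat_mult[symmetric] algebra_simps)
  have "(\<Sum>k<n. exp (- s * (real k * t / n))) = (\<Sum>k<n. x^k)" by (intro sum.cong refl ek)
  also have "\<dots> = (1 - x^n) / (1 - x)" using x1 sum_gp_strict[of x n] by simp
  finally have S: "(\<Sum>k<n. exp (- s * (real k * t / n))) = (1 - exp (- s * t)) / (1 - x)" unfolding xn .
  show ?thesis unfolding Rn_def S x_def by simp
qed

lemma Rn_bounds: assumes s: "s > 0" and t: "t > 0" and n: "n > 0"
  shows "Gt t s \<le> Rn t n s \<and> Rn t n s \<le> Gt t s + t / n"
proof -
  define h where "h = t / n"
  define w where "w = s * h"
  define A where "A = 1 - exp (- s * t)"
  have hp: "h > 0" unfolding h_def using t n by simp
  have wp: "w > 0" unfolding w_def using s hp by simp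
  have A: "0 \<le> A" "A \<le> 1" unfolding A_def using s t by auto
  have R: "Rn t n s = h * A / (1 - exp (- w))" using Rn_closed[OF s t n] unfolding h_def w_def A_def by simp
  have G: "Gt t s = A / s" unfolding Gt_def A_def ..
  have d1: "1 - exp (- w) \<le> w" using exp_ge_add_one_self[of "-w"] by simp
  have d2: "1 - exp (- w) > 0" using wp by simp
  have d3: "1 - exp (- w) \<ge> w / (1 + w)"
  proof -
    have "exp w \<ge> 1 + w" by simp
    hence "exp (-w) \<le> 1 / (1 + w)" using wp by (simp add: exp_minus field_simps)
    moreover have "1 - 1/(1+w) = w/(1+w)" using wp by (simp add: field_simps)
    ultimately show ?thesis by linarith
  qed
  have lo: "A / s \<le> h * A / (1 - exp (- w))"
  proof -
    have "A / s = h * A / w" unfolding w_def using hp s by simp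
    also have "\<dots> \<le> h * A / (1 - exp (- w))" using d1 d2 hp A by (intro divide_left_mono) auto
    finally show ?thesis .
  qed
  have up: "h * A / (1 - exp (- w)) \<le> A / s + h"
  proof -
    have "h * A / (1 - exp (- w)) \<le> h * A / (w / (1 + w))"
      using d3 d2 hp A wp by (intro divide_left_mono) auto
    also have "\<dots> = A / s + A * h" unfolding w_def using hp s by (simp add: field_simps)
    also have "\<dots> \<le> A / s + h" using A hp by (simp add: mult_left_le_one_le)
    finally show ?thesis .
  qed
  show ?thesis using lo up unfolding R G h_def by simp
qed

lemma archi_le: fixes x a D :: real
  assumes "\<And>n::nat. (0::nat) < n \<Longrightarrow> x \<le> a + D / real n" "D \<ge> 0"
  shows "x \<le> a"
proof (rule ccontr)
  assume "\<not> x \<le> a"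
  hence e: "x - a > 0" by simp
  obtain n :: nat where n: "D / (x - a) < n" using reals_Archimedean2 by blast
  have "D / (x - a) \<ge> 0" using e assms(2) by simp
  hence "real n > 0" using n by linarith
  hence np: "n > 0" by simp
  have "D < n * (x - a)" using n e by (simp add: divide_less_eq mult.commute)
  hence "D / n < x - a" using np by (simp add: divide_less_eq mult.commute)
  then show False using assms(1)[of n] np by simp
qed

lemma hadamard:
  fixes af :: rmat and lam y :: "nat \<Rightarrow> real"
  assumes t: "t > 0" and lam: "\<And>i. i < K \<Longrightarrow> lam i > 0"
    and H: "\<And>z. c * sq K z \<le> quad K af z"
  shows "c * (\<Sum>i<K. (y i)^2 * Gt t (2 * lam i)) \<le> (\<Sum>i<K. \<Sum>j<K. af i j * y i * y j * Gt t (lam i + lam j))"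
proof -
  define W1 where "W1 = (\<Sum>i<K. \<Sum>j<K. \<bar>af i j * y i * y j\<bar>)"
  define W2 where "W2 = (\<Sum>i<K. (y i)^2)"
  have W: "W1 \<ge> 0" "W2 \<ge> 0" unfolding W1_def W2_def by (auto intro!: sum_nonneg)
  show ?thesis
  proof (rule archi_le[where D = "t * (W1 + \<bar>c\<bar> * W2)"])
    show "0 \<le> t * (W1 + \<bar>c\<bar> * W2)" using t W by simp
    fix n :: nat assume n: "n > 0"
    define h where "h = t / n"
    have hp: "h > 0" unfolding h_def using t n by simp
    have pk: "c * (\<Sum>i<K. (y i)^2 * exp (- (2 * lam i) * \<tau>)) \<le> (\<Sum>i<K. \<Sum>j<K. af i j * y i * y j * exp (- (lam i + lam j) * \<tau>))" for \<tau>
    proof -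
      define z where "z = (\<lambda>i. exp (- lam i * \<tau>) * y i)"
      have "sq K z = (\<Sum>i<K. (y i)^2 * exp (- (2 * lam i) * \<tau>))"
        unfolding sq_def z_def by (intro sum.cong) (auto simp: power2_eq_square exp_add[symmetric] algebra_simps)
      moreover have "quad K af z = (\<Sum>i<K. \<Sum>j<K. af i j * y i * y j * exp (- (lam i + lam j) * \<tau>))"
        unfolding quad_def mv_def z_def
        by (simp add: sum_distrib_left algebra_simps exp_add[symmetric])
      ultimately show ?thesis using H[of z] by simp
    qed
    have sumR: "c * (\<Sum>i<K. (y i)^2 * Rn t n (2 * lam i)) \<le> (\<Sum>i<K. \<Sum>j<K. af i j * y i * y j * Rn t n (lam i + lam j))"
    proof -
      have "c * (\<Sum>i<K. (y i)^2 * Rn t n (2 * lam i)) = h * (\<Sum>k<n. c * (\<Sum>i<K. (y i)^2 * exp (- (2 * lam i) * (real k * t / n))))"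
        unfolding Rn_def h_def
        by (simp add: sum_distrib_left sum_distrib_right algebra_simps sum.swap[of _ "{..<n}"])
      also have "\<dots> \<le> h * (\<Sum>k<n. (\<Sum>i<K. \<Sum>j<K. af i j * y i * y j * exp (- (lam i + lam j) * (real k * t / n))))"
        using hp by (intro mult_left_mono sum_mono pk) auto
      also have "\<dots> = (\<Sum>i<K. \<Sum>j<K. af i j * y i * y j * Rn t n (lam i + lam j))"
        unfolding Rn_def h_def
        by (simp add: sum_distrib_left sum_distrib_right algebra_simps sum.swap[of _ "{..<n}"])
      finally show ?thesis .
    qed
    have e1: "\<bar>(\<Sum>i<K. \<Sum>j<K. af i j * y i * y j * Rn t n (lam i + lam j)) - (\<Sum>i<K. \<Sum>j<K. af i j * y i * y j * Gt t (lam i + lam j))\<bar> \<le> h * W1"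
    proof -
      have "\<bar>(\<Sum>i<K. \<Sum>j<K. af i j * y i * y j * Rn t n (lam i + lam j)) - (\<Sum>i<K. \<Sum>j<K. af i j * y i * y j * Gt t (lam i + lam j))\<bar>
          = \<bar>\<Sum>i<K. \<Sum>j<K. af i j * y i * y j * (Rn t n (lam i + lam j) - Gt t (lam i + lam j))\<bar>"
        by (simp add: sum_subtractf[symmetric] algebra_simps)
      also have "\<dots> \<le> (\<Sum>i<K. \<Sum>j<K. \<bar>af i j * y i * y j * (Rn t n (lam i + lam j) - Gt t (lam i + lam j))\<bar>)"
        by (rule order_trans[OF sum_abs]) (intro sum_mono sum_abs)
      also have "\<dots> \<le> (\<Sum>i<K. \<Sum>j<K. \<bar>af i j * y i * y j\<bar> * h)"
      proof (intro sum_mono)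
        fix i j assume "i \<in> {..<K}" "j \<in> {..<K}"
        hence s: "lam i + lam j > 0" using lam by (simp add: add_pos_pos)
        have "\<bar>Rn t n (lam i + lam j) - Gt t (lam i + lam j)\<bar> \<le> h"
          using Rn_bounds[OF s t n] unfolding h_def by auto
        then show "\<bar>af i j * y i * y j * (Rn t n (lam i + lam j) - Gt t (lam i + lam j))\<bar> \<le> \<bar>af i j * y i * y j\<bar> * h"
          by (simp add: abs_mult mult_left_mono)
      qed
      also have "\<dots> = h * W1" unfolding W1_def by (simp add: sum_distrib_left sum_distrib_right mult.commute)
      finally show ?thesis .
    qed
    have e2: "\<bar>c * (\<Sum>i<K. (y i)^2 * Rn t n (2 * lam i)) - c * (\<Sum>i<K. (y i)^2 * Gt t (2 * lam i))\<bar> \<le> h * (\<bar>c\<bar> * W2)"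
    proof -
      have d: "(\<Sum>i<K. (y i)^2 * Rn t n (2 * lam i)) - (\<Sum>i<K. (y i)^2 * Gt t (2 * lam i)) = (\<Sum>i<K. (y i)^2 * (Rn t n (2 * lam i) - Gt t (2 * lam i)))"
        by (simp add: sum_subtractf[symmetric] right_diff_distrib)
      have "\<bar>c * (\<Sum>i<K. (y i)^2 * Rn t n (2 * lam i)) - c * (\<Sum>i<K. (y i)^2 * Gt t (2 * lam i))\<bar>
          = \<bar>c * ((\<Sum>i<K. (y i)^2 * Rn t n (2 * lam i)) - (\<Sum>i<K. (y i)^2 * Gt t (2 * lam i)))\<bar>"
        by (simp only: right_diff_distrib)
      also have "\<dots> = \<bar>c\<bar> * \<bar>\<Sum>i<K. (y i)^2 * (Rn t n (2 * lam i) - Gt t (2 * lam i))\<bar>"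
        unfolding d by (rule abs_mult)
      finally have "\<bar>c * (\<Sum>i<K. (y i)^2 * Rn t n (2 * lam i)) - c * (\<Sum>i<K. (y i)^2 * Gt t (2 * lam i))\<bar>
          = \<bar>c\<bar> * \<bar>\<Sum>i<K. (y i)^2 * (Rn t n (2 * lam i) - Gt t (2 * lam i))\<bar>" .
      also have "\<dots> \<le> \<bar>c\<bar> * (\<Sum>i<K. (y i)^2 * h)"
      proof (intro mult_left_mono order_trans[OF sum_abs] sum_mono)
        fix i assume "i \<in> {..<K}"
        hence s: "2 * lam i > 0" using lam by simp
        have "\<bar>Rn t n (2 * lam i) - Gt t (2 * lam i)\<bar> \<le> h"
          using Rn_bounds[OF s t n] unfolding h_def by auto
        then show "\<bar>(y i)^2 * (Rn t n (2 * lam i) - Gt t (2 * lam i))\<bar> \<le> (y i)^2 * h"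
          by (simp add: abs_mult mult_left_mono)
      qed simp
      also have "\<dots> = h * (\<bar>c\<bar> * W2)" unfolding W2_def by (simp add: sum_distrib_left sum_distrib_right algebra_simps)
      finally show ?thesis .
    qed
    have "c * (\<Sum>i<K. (y i)^2 * Gt t (2 * lam i)) \<le> (\<Sum>i<K. \<Sum>j<K. af i j * y i * y j * Gt t (lam i + lam j)) + (h * W1 + h * (\<bar>c\<bar> * W2))"
      using sumR e1 e2 by linarith
    also have "h * W1 + h * (\<bar>c\<bar> * W2) = t * (W1 + \<bar>c\<bar> * W2) / n" unfolding h_def by (simp add: algebra_simps add_divide_distrib)
    finally show "c * (\<Sum>i<K. (y i)^2 * Gt t (2 * lam i)) \<le> (\<Sum>i<K. \<Sum>j<K. af i j * y i * y j * Gt t (lam i + lam j)) + t * (W1 + \<bar>c\<bar> * W2) / n" .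
  qed
qed



lemma quad_unit: assumes i: "i < K" shows "quad K C (\<lambda>k. if k = i then 1 else 0) = C i i"
proof -
  let ?e = "\<lambda>k. if k = i then 1 else (0::real)"
  have mve: "mv K C ?e k = C k i" for k unfolding mv_def using delta_r[where f="\<lambda>j. C k j" and K=K and j=i] i by simp
  have "(\<Sum>k<K. ?e k * C k i) = (\<Sum>k<K. if k = i then C k i else 0)" by (rule sum.cong) auto
  also have "\<dots> = C i i" using i by (simp only: sum.delta finite_lessThan lessThan_iff) simp
  finally show ?thesis unfolding quad_def mve .
qed

lemma sq_unit: assumes i: "i < K" shows "sq K (\<lambda>k. if k = i then 1 else 0) = 1"
proof -
  have "sq K (\<lambda>k. if k = i then 1 else (0::real)) = (\<Sum>k<K. if k = i then 1 else 0)"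
    unfolding sq_def by (rule sum.cong) auto
  then show ?thesis using i by simp
qed

lemma Gt_props: assumes s: "s > 0" and t: "t > 0"
  shows "0 < Gt t s" "Gt t s \<le> t" "Gt t s \<le> 1 / s"
proof -
  have e: "exp (- s * t) < 1" using s t by simp
  show "0 < Gt t s" unfolding Gt_def using e s by simp
  have "1 - exp (- s * t) \<le> s * t" using exp_ge_add_one_self[of "- s * t"] by simp
  then show "Gt t s \<le> t" unfolding Gt_def using s by (simp add: divide_le_eq mult.commute)
  show "Gt t s \<le> 1 / s" unfolding Gt_def using s by (intro divide_right_mono) auto
qed

lemma ellG_diag: assumes l: "l > 0" and t: "t > 0"
  shows "1/2 \<le> ((1 + l * t) / t) * Gt t (2 * l) \<and> ((1 + l * t) / t) * Gt t (2 * l) \<le> 2"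
proof -
  have s: "2 * l > 0" using l by simp
  note G = Gt_props[OF s t]
  have eq: "((1 + l * t) / t) * Gt t (2 * l) = Gt t (2*l) / t + l * Gt t (2*l)"
    using t by (simp add: field_simps)
  have u1: "Gt t (2*l) / t \<le> 1" using G(2) t by (simp add: divide_le_eq)
  have u2: "l * Gt t (2*l) \<le> 1/2"
  proof -
    have "l * Gt t (2*l) \<le> l * (1 / (2*l))" using G(3) l by (intro mult_left_mono) auto
    also have "\<dots> = 1/2" using l by simp
    finally show ?thesis .
  qed
  define u where "u = l * t"
  have up: "u > 0" unfolding u_def using l t by simp
  have "exp (2*u) \<ge> 1 + u"
  proof -
    have "exp (2*u) \<ge> 1 + 2*u" by (rule exp_ge_add_one_self)
    then show ?thesis using up by linarith
  qed
  hence "exp (- (2*u)) \<le> 1 / (1 + u)" using up by (simp add: exp_minus field_simps)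
  hence "1 - exp (- (2*u)) \<ge> u / (1 + u)" using up by (simp add: field_simps)
  hence lo: "(1 + u) * (1 - exp (- (2*u))) \<ge> u" using up by (simp add: field_simps)
  have "((1 + l * t) / t) * Gt t (2 * l) = (1 + u) * (1 - exp (- (2*u))) / (2 * u)"
    unfolding Gt_def u_def using t l by (simp add: field_simps)
  also have "\<dots> \<ge> u / (2*u)" using lo up by (intro divide_right_mono) auto
  finally have "((1 + l * t) / t) * Gt t (2 * l) \<ge> 1/2" using up by simp
  then show ?thesis using eq u1 u2 by linarith
qed

lemma ellG_off: assumes li: "li > 0" and lj: "lj > 0" and t: "t > 0"
  shows "sqrt ((1 + li * t) / t) * sqrt ((1 + lj * t) / t) * Gt t (li + lj) \<le> 2"
proof -
  have s: "li + lj > 0" using li lj by simp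
  note G = Gt_props[OF s t]
  let ?a = "sqrt ((1 + li * t) / t)" and ?b = "sqrt ((1 + lj * t) / t)"
  have a2: "?a^2 = 1/t + li" using li t by (simp add: field_simps)
  have b2: "?b^2 = 1/t + lj" using lj t by (simp add: field_simps)
  have ab: "?a * ?b \<le> (?a^2 + ?b^2) / 2"
  proof -
    have "0 \<le> (?a - ?b)^2" by simp
    then show ?thesis by (simp add: power2_diff field_simps)
  qed
  have "?a * ?b * Gt t (li + lj) \<le> ((?a^2 + ?b^2) / 2) * Gt t (li + lj)"
    using ab G(1) by (intro mult_right_mono) auto
  also have "\<dots> = (Gt t (li + lj) / t + (li + lj) * Gt t (li + lj) / 2)"
    unfolding a2 b2 using t by (simp add: field_simps)
  also have "\<dots> \<le> 1 + 1/2"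
  proof -
    have "Gt t (li + lj) / t \<le> 1" using G(2) t by (simp add: divide_le_eq)
    moreover have "(li + lj) * Gt t (li + lj) \<le> 1"
      using G(3) s by (simp add: le_divide_eq mult.commute)
    ultimately show ?thesis by linarith
  qed
  finally show ?thesis by simp
qed

lemma pw_cmp1: fixes d g :: real assumes d: "d \<ge> 0" and g: "g \<ge> 0"
  shows "(1 + d) powr g \<le> 2 powr g * (1 + d powr g)"
proof (cases "d \<le> 1")
  case True
  have "(1 + d) powr g \<le> 2 powr g" using True d g by (intro powr_mono2) auto
  also have "\<dots> \<le> 2 powr g * (1 + d powr g)" by (simp add: mult_le_cancel_left1)
  finally show ?thesis .
next
  case False
  have "(1 + d) powr g \<le> (2 * d) powr g" using False d g by (intro powr_mono2) auto
  also have "\<dots> = 2 powr g * d powr g" using d by (simp add: powr_mult)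
  also have "\<dots> \<le> 2 powr g * (1 + d powr g)" by (intro mult_left_mono) auto
  finally show ?thesis .
qed

lemma pw_cmp2: fixes d g :: real assumes d: "d \<ge> 0" and g: "g \<ge> 0"
  shows "1 + d powr g \<le> 2 * (1 + d) powr g"
proof -
  have "1 \<le> (1 + d) powr g" using d g by (simp add: ge_one_powr_ge_zero)
  moreover have "d powr g \<le> (1 + d) powr g" using d g by (intro powr_mono2) auto
  ultimately show ?thesis by linarith
qed

lemma jnf_sq: "vec K z \<bullet> vec K z = sq K z"
  unfolding scalar_prod_def sq_def by (simp add: atLeast0LessThan power2_eq_square)

lemma jnf_quad: assumes a: "a \<in> carrier_mat K K"
  shows "vec K z \<bullet> (a *\<^sub>v vec K z) = quad K (\<lambda>i j. a $$ (i,j)) z"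
proof -
  have "vec K z \<bullet> (a *\<^sub>v vec K z) = (\<Sum>i<K. z i * (row a i \<bullet> vec K z))"
    unfolding scalar_prod_def[of "vec K z"] using a by (simp add: atLeast0LessThan)
  also have "\<dots> = (\<Sum>i<K. z i * (\<Sum>j<K. a $$ (i,j) * z j))"
  proof (rule sum.cong)
    fix i assume i: "i \<in> {..<K}"
    have "row a i \<bullet> vec K z = (\<Sum>j<K. a $$ (i,j) * z j)"
      unfolding scalar_prod_def using a i by (simp add: atLeast0LessThan)
    then show "z i * (row a i \<bullet> vec K z) = z i * (\<Sum>j<K. a $$ (i,j) * z j)" by simp
  qed simp
  finally show ?thesis unfolding quad_def mv_def .
qed

lemma jnf_mult: assumes "A \<in> carrier_mat K K" "B \<in> carrier_mat K K" "i < K" "j < K"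
  shows "(A * B) $$ (i,j) = (\<Sum>k<K. A $$ (i,k) * B $$ (k,j))"
  using assms by (simp add: scalar_prod_def atLeast0LessThan)

lemma quad_neg: "quad K (\<lambda>i j. - C i j) z = - quad K C z"
  unfolding quad_def mv_def by (simp add: sum_negf)

lemma quad_expand: "quad K C z = (\<Sum>i<K. \<Sum>j<K. C i j * z i * z j)"
  unfolding quad_def mv_def by (simp add: sum_distrib_left algebra_simps)

theorem proposition4p12:
  fixes \<gamma> \<kappa> \<Lambda>0 \<Lambda>1 :: real
  assumes "\<gamma> > 1" and "0 < \<Lambda>0" and "\<Lambda>0 \<le> \<Lambda>1" and "\<kappa> > 0"
  shows "\<exists>c1::real. \<forall>(K::nat) (lam::nat \<Rightarrow> real) (a::real mat) (t::real) i j.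
    K \<ge> 1 \<longrightarrow>
    (\<forall>i<K. 0 < lam i) \<longrightarrow>
    (\<forall>i j. i \<le> j \<longrightarrow> j < K \<longrightarrow> lam i \<le> lam j) \<longrightarrow>
    a \<in> carrier_mat K K \<longrightarrow>
    transpose_mat a = a \<longrightarrow>
    (\<forall>x \<in> carrier_vec K. x \<noteq> 0\<^sub>v K \<longrightarrow> 0 < x \<bullet> (a *\<^sub>v x)) \<longrightarrow>
    (\<forall>x \<in> carrier_vec K. \<Lambda>0 * (x \<bullet> x) \<le> x \<bullet> (a *\<^sub>v x)
                          \<and> x \<bullet> (a *\<^sub>v x) \<le> \<Lambda>1 * (x \<bullet> x)) \<longrightarrow>
    (\<forall>i<K. \<forall>j<K. \<bar>a $$ (i,j)\<bar> \<le> \<kappa> / (1 + \<bar>real i - real j\<bar> powr \<gamma>)) \<longrightarrow>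
    0 < t \<longrightarrow> i < K \<longrightarrow> j < K \<longrightarrow>
      (1 / (2 * \<Lambda>1)) * Lfun lam i i t * (if i = j then 1 else 0) \<le> \<bar>At_mat K lam a t $$ (i,j)\<bar>
    \<and> \<bar>At_mat K lam a t $$ (i,j)\<bar> \<le> Lfun lam i j t * (c1 / (1 + \<bar>real i - real j\<bar> powr \<gamma>))"
proof -
  note g = assms(1) and L0 = assms(2) and L01 = assms(3) and kp = assms(4)
  define m where "m = \<Lambda>0 / 2"
  define M where "M = 2 * \<Lambda>1"
  define \<kappa>' where "\<kappa>' = 2 * \<kappa> * 2 powr \<gamma>"
  have m: "0 < m" "m \<le> M" unfolding m_def M_def using L0 L01 by auto
  have kp': "\<kappa>' \<ge> 0" unfolding \<kappa>'_def using kp by simp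
  obtain C where C: "\<And>K b X i j. 0 < K \<Longrightarrow> symm K b \<Longrightarrow>
     (\<forall>x. m * sq K x \<le> quad K b x \<and> quad K b x \<le> M * sq K x) \<Longrightarrow>
     (\<forall>i<K. \<forall>j<K. \<bar>b i j\<bar> * vw \<gamma> i j \<le> \<kappa>') \<Longrightarrow>
     eqK K (mm K b X) idm \<Longrightarrow> i < K \<Longrightarrow> j < K \<Longrightarrow> \<bar>X i j\<bar> * vw \<gamma> i j \<le> C"
    using jaffard[OF g m kp'] by blast
  show ?thesis
  proof (intro exI[of _ "2 * C"] allI impI)
    fix K :: nat and lam :: "nat \<Rightarrow> real" and a :: "real mat" and t :: real and i j :: nat
    assume K1: "K \<ge> 1" and lamp: "\<forall>i<K. 0 < lam i"
      and acar: "a \<in> carrier_mat K K" and asym: "transpose_mat a = a"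
      and abnd: "\<forall>x \<in> carrier_vec K. \<Lambda>0 * (x \<bullet> x) \<le> x \<bullet> (a *\<^sub>v x) \<and> x \<bullet> (a *\<^sub>v x) \<le> \<Lambda>1 * (x \<bullet> x)"
      and adec: "\<forall>i<K. \<forall>j<K. \<bar>a $$ (i,j)\<bar> \<le> \<kappa> / (1 + \<bar>real i - real j\<bar> powr \<gamma>)"
      and tp: "0 < t" and iK: "i < K" and jK: "j < K"
    have K0: "0 < K" using K1 by simp
    have lam: "\<And>i. i < K \<Longrightarrow> lam i > 0" using lamp by auto
    define af where "af = (\<lambda>i j. a $$ (i,j))"
    have H: "\<Lambda>0 * sq K z \<le> quad K af z \<and> quad K af z \<le> \<Lambda>1 * sq K z" for z
      using abnd[rule_format, OF vec_carrier[of K z]] unfolding jnf_sq jnf_quad[OF acar] af_def .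
    have afsym: "af i j = af j i" if "i < K" "j < K" for i j
    proof -
      have "af i j = transpose_mat a $$ (i,j)" unfolding af_def using asym by simp
      also have "\<dots> = af j i" unfolding af_def using that acar by simp
      finally show ?thesis .
    qed
    define l where "l = (\<lambda>i. sqrt ((1 + lam i * t) / t))"
    have lp: "l k > 0" if "k < K" for k
    proof -
      have "0 < lam k * t" using lam[OF that] tp by simp
      hence "0 < (1 + lam k * t) / t" using tp by simp
      then show ?thesis unfolding l_def by simp
    qed
    have l2: "(l k)^2 = (1 + lam k * t) / t" if "k < K" for k
      unfolding l_def using lam[OF that] tp by simp
    define atm where "atm = at_mat K lam a t"
    have atc: "atm \<in> carrier_mat K K" unfolding atm_def at_mat_def by simp
    have atE: "atm $$ (i,j) = af i j * Gt t (lam i + lam j)" if "i < K" "j < K" for i j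
      unfolding atm_def at_mat_def af_def Gt_def using that by simp
    define b where "b = (\<lambda>i j. l i * l j * af i j * Gt t (lam i + lam j))"
    have bsym: "symm K b" unfolding symm_def b_def using afsym by (auto simp: add.commute mult.commute)
    have qb: "quad K b x = (\<Sum>i<K. \<Sum>j<K. af i j * (l i * x i) * (l j * x j) * Gt t (lam i + lam j))" for x
      unfolding quad_expand b_def by (simp add: algebra_simps)
    have diagsum: "(\<Sum>i<K. (l i * x i)^2 * Gt t (2 * lam i)) = (\<Sum>i<K. (x i)^2 * ((1 + lam i * t) / t * Gt t (2 * lam i)))" for x
      by (intro sum.cong refl) (simp add: power_mult_distrib l2 algebra_simps)
    have dlo: "sq K x / 2 \<le> (\<Sum>i<K. (x i)^2 * ((1 + lam i * t) / t * Gt t (2 * lam i)))" for x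
    proof -
      have "sq K x / 2 = (\<Sum>i<K. (x i)^2 * (1/2))" unfolding sq_def by (simp add: sum_divide_distrib)
      also have "\<dots> \<le> (\<Sum>i<K. (x i)^2 * ((1 + lam i * t) / t * Gt t (2 * lam i)))"
        using ellG_diag[OF lam tp] by (intro sum_mono mult_left_mono) auto
      finally show ?thesis .
    qed
    have dhi: "(\<Sum>i<K. (x i)^2 * ((1 + lam i * t) / t * Gt t (2 * lam i))) \<le> 2 * sq K x" for x
    proof -
      have "(\<Sum>i<K. (x i)^2 * ((1 + lam i * t) / t * Gt t (2 * lam i))) \<le> (\<Sum>i<K. (x i)^2 * 2)"
        using ellG_diag[OF lam tp] by (intro sum_mono mult_left_mono) auto
      also have "\<dots> = 2 * sq K x" unfolding sq_def by (simp add: sum_distrib_left mult.commute)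
      finally show ?thesis .
    qed
    have bQ: "m * sq K x \<le> quad K b x \<and> quad K b x \<le> M * sq K x" for x
    proof
      have "\<Lambda>0 * (\<Sum>i<K. (l i * x i)^2 * Gt t (2 * lam i)) \<le> quad K b x"
        unfolding qb by (rule hadamard[OF tp lam]) (use H in auto)
      moreover have "\<Lambda>0 * (sq K x / 2) \<le> \<Lambda>0 * (\<Sum>i<K. (l i * x i)^2 * Gt t (2 * lam i))"
        unfolding diagsum using dlo L0 by (intro mult_left_mono) auto
      ultimately show "m * sq K x \<le> quad K b x" unfolding m_def by simp
      have "- \<Lambda>1 * (\<Sum>i<K. (l i * x i)^2 * Gt t (2 * lam i)) \<le> (\<Sum>i<K. \<Sum>j<K. (- af i j) * (l i * x i) * (l j * x j) * Gt t (lam i + lam j))"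
        by (rule hadamard[OF tp lam, where af="\<lambda>i j. - af i j"]) (use H quad_neg in auto)
      hence "quad K b x \<le> \<Lambda>1 * (\<Sum>i<K. (l i * x i)^2 * Gt t (2 * lam i))"
        unfolding qb by (simp add: sum_negf)
      also have "\<dots> \<le> \<Lambda>1 * (2 * sq K x)"
        unfolding diagsum using dhi L0 L01 by (intro mult_left_mono) auto
      finally show "quad K b x \<le> M * sq K x" unfolding M_def by simp
    qed
    have bdec: "\<forall>i<K. \<forall>j<K. \<bar>b i j\<bar> * vw \<gamma> i j \<le> \<kappa>'"
    proof (intro allI impI)
      fix i j assume ij: "i < K" "j < K"
      let ?d = "\<bar>real i - real j\<bar>"
      have dp: "1 + ?d powr \<gamma> > 0" by (simp add: add_pos_nonneg)
      have w: "vw \<gamma> i j \<le> 2 powr \<gamma> * (1 + ?d powr \<gamma>)" unfolding vw_def using pw_cmp1[of ?d \<gamma>] g by simp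
      have lg: "l i * l j * Gt t (lam i + lam j) \<le> 2" unfolding l_def by (rule ellG_off[OF lam[OF ij(1)] lam[OF ij(2)] tp])
      have lg0: "0 \<le> l i * l j * Gt t (lam i + lam j)"
        using lp[OF ij(1)] lp[OF ij(2)] Gt_props(1)[of "lam i + lam j" t] lam[OF ij(1)] lam[OF ij(2)] tp by simp
      have be: "b i j = (l i * l j * Gt t (lam i + lam j)) * af i j" unfolding b_def by (simp add: algebra_simps)
      have "\<bar>b i j\<bar> = (l i * l j * Gt t (lam i + lam j)) * \<bar>af i j\<bar>"
        unfolding be abs_mult[of "l i * l j * Gt t (lam i + lam j)" "af i j"] abs_of_nonneg[OF lg0] ..
      also have "\<dots> \<le> 2 * (\<kappa> / (1 + ?d powr \<gamma>))"
        using lg lg0 adec ij unfolding af_def by (intro mult_mono) auto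
      finally have "\<bar>b i j\<bar> * vw \<gamma> i j \<le> 2 * (\<kappa> / (1 + ?d powr \<gamma>)) * (2 powr \<gamma> * (1 + ?d powr \<gamma>))"
        using w vw_ge1[of \<gamma> i j] g kp dp by (intro mult_mono) auto
      also have "\<dots> = \<kappa>'" unfolding \<kappa>'_def using dp by (simp add: field_simps)
      finally show "\<bar>b i j\<bar> * vw \<gamma> i j \<le> \<kappa>'" .
    qed
    have qat: "quad K (\<lambda>i j. atm $$ (i,j)) z = (\<Sum>i<K. \<Sum>j<K. af i j * z i * z j * Gt t (lam i + lam j))" for z
      unfolding quad_expand by (intro sum.cong refl) (simp add: atE algebra_simps)
    obtain B where inv: "mat_inverse atm = Some B"
    proof (cases "mat_inverse atm")
      case None
      have "det atm = 0"
      proof (rule ccontr)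
        assume "det atm \<noteq> 0"
        then have "atm \<in> Units (ring_mat TYPE(real) K (undefined::unit))" by (rule det_non_zero_imp_unit[OF atc])
        moreover have "atm \<notin> Units (ring_mat TYPE(real) K (undefined::unit))" by (rule mat_inverse(1)[OF atc None])
        ultimately show False by blast
      qed
      then obtain v where v: "v \<in> carrier_vec K" "v \<noteq> 0\<^sub>v K" "atm *\<^sub>v v = 0\<^sub>v K"
        using det_0_iff_vec_prod_zero[OF atc] by blast
      define z where "z = (\<lambda>i. v $ i)"
      have vz: "v = vec K z" unfolding z_def using v(1) by auto
      have "quad K (\<lambda>i j. atm $$ (i,j)) z = v \<bullet> (atm *\<^sub>v v)" unfolding vz jnf_quad[OF atc] ..
      also have "\<dots> = 0" unfolding v(3) using v(1) by simp
      finally have q0: "quad K (\<lambda>i j. atm $$ (i,j)) z = 0" .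
      obtain k where k: "k < K" "z k \<noteq> 0"
      proof -
        have "\<exists>k<K. v $ k \<noteq> 0"
        proof (rule ccontr)
          assume "\<not> (\<exists>k<K. v $ k \<noteq> 0)"
          hence "v = 0\<^sub>v K" using v(1) by (intro eq_vecI) auto
          then show False using v(2) by simp
        qed
        then show ?thesis using that unfolding z_def by blast
      qed
      have "\<Lambda>0 * (\<Sum>i<K. (z i)^2 * Gt t (2 * lam i)) \<le> quad K (\<lambda>i j. atm $$ (i,j)) z"
        unfolding qat by (rule hadamard[OF tp lam]) (use H in auto)
      moreover have "0 < (\<Sum>i<K. (z i)^2 * Gt t (2 * lam i))"
      proof (rule sum_pos2[of "{..<K}" k])
        show "0 < (z k)^2 * Gt t (2 * lam k)" using k Gt_props(1)[of "2 * lam k" t] lam[OF k(1)] tp by simp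
        show "\<And>i. i \<in> {..<K} \<Longrightarrow> 0 \<le> (z i)^2 * Gt t (2 * lam i)"
          using Gt_props(1) lam tp by (simp add: less_imp_le)
      qed (use k in auto)
      ultimately have "0 < \<Lambda>0 * (\<Sum>i<K. (z i)^2 * Gt t (2 * lam i))" "\<Lambda>0 * (\<Sum>i<K. (z i)^2 * Gt t (2 * lam i)) \<le> 0"
        using q0 L0 by (auto intro: mult_pos_pos)
      then show ?thesis by linarith
    next
      case (Some B) then show ?thesis using that by blast
    qed
    have B: "atm * B = 1\<^sub>m K" "B \<in> carrier_mat K K" using mat_inverse(2)[OF atc inv] by auto
    have AtB: "At_mat K lam a t = B" unfolding At_mat_def atm_def[symmetric] inv by simp
    define X where "X = (\<lambda>i j. B $$ (i,j) / (l i * l j))"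
    have E: "eqK K (mm K b X) idm" unfolding eqK_def
    proof (intro allI impI)
      fix i j assume ij: "i < K" "j < K"
      have "mm K b X i j = (\<Sum>k<K. (l i / l j) * (atm $$ (i,k) * B $$ (k,j)))"
        unfolding mm_def b_def X_def
      proof (rule sum.cong)
        fix k assume k: "k \<in> {..<K}"
        have "l k > 0" using lp k by simp
        then show "l i * l k * af i k * Gt t (lam i + lam k) * (B $$ (k, j) / (l k * l j)) = l i / l j * (atm $$ (i, k) * B $$ (k, j))"
          using atE[OF ij(1)] k by (simp add: field_simps)
      qed simp
      also have "\<dots> = (l i / l j) * (atm * B) $$ (i,j)"
        using jnf_mult[OF atc B(2) ij] by (simp add: sum_distrib_left)
      also have "\<dots> = idm i j" unfolding B(1) using ij lp[OF ij(1)] lp[OF ij(2)] by (simp add: idm_def)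
      finally show "mm K b X i j = idm i j" .
    qed
    have Xb: "\<bar>X i j\<bar> * vw \<gamma> i j \<le> C" by (rule C[OF K0 bsym _ bdec E iK jK]) (use bQ in blast)
    have psd: "\<And>z. 0 \<le> quad K b z"
    proof -
      fix z
      have "0 \<le> m * sq K z" using m sq_nonneg[of K z] by simp
      then show "0 \<le> quad K b z" using bQ[of z] by linarith
    qed
    have Lf: "Lfun lam i j t = l i * l j" unfolding Lfun_def l_def ..
    have Bij: "\<bar>B $$ (i,j)\<bar> = (l i * l j) * \<bar>X i j\<bar>"
      unfolding X_def using lp[OF iK] lp[OF jK] by (simp add: abs_mult)
    have llp: "l i * l j > 0" using lp[OF iK] lp[OF jK] by simp
    show "(1 / (2 * \<Lambda>1)) * Lfun lam i i t * (if i = j then 1 else 0) \<le> \<bar>At_mat K lam a t $$ (i,j)\<bar>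
      \<and> \<bar>At_mat K lam a t $$ (i,j)\<bar> \<le> Lfun lam i j t * (2 * C / (1 + \<bar>real i - real j\<bar> powr \<gamma>))"
    proof
      show "(1 / (2 * \<Lambda>1)) * Lfun lam i i t * (if i = j then 1 else 0) \<le> \<bar>At_mat K lam a t $$ (i,j)\<bar>"
      proof (cases "i = j")
        case False then show ?thesis by simp
      next
        case True
        have d1: "1 \<le> X i i * b i i" by (rule diag_lower[OF bsym psd E iK])
        have aii: "\<Lambda>0 \<le> af i i \<and> af i i \<le> \<Lambda>1"
          using H[of "\<lambda>k. if k = i then 1 else 0"] quad_unit[OF iK, of af] sq_unit[OF iK] by simp
        have bii: "b i i = af i i * ((1 + lam i * t) / t * Gt t (2 * lam i))"
          unfolding b_def using l2[OF iK] by (simp add: power2_eq_square algebra_simps mult_2)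
        have ed: "1/2 \<le> (1 + lam i * t) / t * Gt t (2 * lam i) \<and> (1 + lam i * t) / t * Gt t (2 * lam i) \<le> 2"
          by (rule ellG_diag[OF lam[OF iK] tp])
        have bpos: "b i i > 0" unfolding bii by (rule mult_pos_pos) (use aii L0 ed in linarith)+
        have "af i i * ((1 + lam i * t) / t * Gt t (2 * lam i)) \<le> \<Lambda>1 * 2"
          by (rule mult_mono) (use aii ed L0 in linarith)+
        hence ble: "b i i \<le> 2 * \<Lambda>1" unfolding bii by simp
        have Xii: "X i i \<ge> 1 / b i i" using d1 bpos by (simp add: divide_le_eq mult.commute)
        have "1 / (2 * \<Lambda>1) \<le> 1 / b i i" using bpos ble by (intro divide_left_mono) auto
        hence X2: "1 / (2 * \<Lambda>1) \<le> \<bar>X i i\<bar>" using Xii by linarith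
        have "(1 / (2 * \<Lambda>1)) * (l i * l i) \<le> \<bar>X i i\<bar> * (l i * l i)"
          using X2 lp[OF iK] by (intro mult_right_mono) auto
        moreover have Lfi: "Lfun lam i i t = l i * l i" unfolding Lfun_def l_def ..
        moreover have "\<bar>At_mat K lam a t $$ (i,j)\<bar> = \<bar>X i i\<bar> * (l i * l i)"
          using True Bij AtB by (simp add: mult.commute)
        ultimately show ?thesis using True by simp
      qed
      let ?d = "\<bar>real i - real j\<bar>"
      have vwp: "vw \<gamma> i j > 0" using vw_pos g by simp
      have "0 \<le> \<bar>X i j\<bar> * vw \<gamma> i j" using vwp by simp
      hence C0: "C \<ge> 0" using Xb by linarith
      have dp: "1 + ?d powr \<gamma> > 0" by (simp add: add_pos_nonneg)
      have w2: "1 + ?d powr \<gamma> \<le> 2 * vw \<gamma> i j" unfolding vw_def using pw_cmp2[of ?d \<gamma>] g by simp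
      have "\<bar>X i j\<bar> \<le> C / vw \<gamma> i j" using Xb vwp by (simp add: le_divide_eq)
      also have "C / vw \<gamma> i j \<le> 2 * C / (1 + ?d powr \<gamma>)"
      proof -
        have h: "C * (1 + ?d powr \<gamma>) \<le> (2*C) * vw \<gamma> i j" using mult_left_mono[OF w2 C0] by (simp add: algebra_simps)
        have e: "C / vw \<gamma> i j * (1 + ?d powr \<gamma>) = C * (1 + ?d powr \<gamma>) / vw \<gamma> i j" by simp
        have "C * (1 + ?d powr \<gamma>) / vw \<gamma> i j \<le> 2*C" using h vwp by (simp add: divide_le_eq)
        hence "C / vw \<gamma> i j * (1 + ?d powr \<gamma>) \<le> 2*C" using e by simp
        thus ?thesis using dp by (simp add: le_divide_eq)
      qed
      finally have "\<bar>X i j\<bar> \<le> 2 * C / (1 + ?d powr \<gamma>)" .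
      hence "(l i * l j) * \<bar>X i j\<bar> \<le> (l i * l j) * (2 * C / (1 + ?d powr \<gamma>))"
        using llp by (intro mult_left_mono) auto
      then show "\<bar>At_mat K lam a t $$ (i,j)\<bar> \<le> Lfun lam i j t * (2 * C / (1 + \<bar>real i - real j\<bar> powr \<gamma>))"
        unfolding AtB Bij Lf .
    qed
  qed
qed

end
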